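(* Let $m\ge 0$ and let $a_0,\dots,a_m\in\mathcal{C}^\infty_b(\mathbb{T}^2)$, where $\mathbb{T}^2=\mathbb{R}^2/\mathbb{Z}^2$ and each $a_k$ is identified with a $\mathbb{Z}^2$-periodic smooth function on $\mathbb{R}^2$ with bounded derivatives. For $\vartheta\in\mathbb{R}$ define the differential operator on $\mathbb{R}$ $$A_\vartheta=\sum_{k=0}^m a_k(x,\vartheta x)\frac{d^k}{dx^k},$$ and assume these operators are self-adjoint and elliptic on $L^2(\mathbb{R})$. Let $\theta\in\mathbb{R}$ and let $(\theta_n)_{n\in\mathbb{N}}$ be a sequence of real numbers with $\theta_n\to\theta$. Then $$\lim_{n\to\infty}\big\lVert (A_\theta-A_{\theta_n})f\big\rVert_{L^2(\mathbb{R})}=0\quad\text{for all } f\in H^m(\mathbb{R}).$$ In particular, the sequence of spectra $\sigma(A_{\theta_n})$ is spectrally inclusive: for every $\lambda\in\sigma(A_\theta)$ there exists a sequence $\lambda_n\in\sigma(A_{\theta_n})$ with $\lambda_n\to\lambda$.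
   Context: $\sigma(\cdot)$ denotes the spectrum of the operator acting on $L^2(\mathbb{R})$. $H^m(\mathbb{R})$ is the standard Sobolev space. *)

theory Defs
  imports "HOL-Analysis.Analysis"
begin

text \<open>F i j is the partial derivative of order (i,j); all of them exist (Frechet), and are bounded.\<close>
definition smooth_bounded_periodic :: "(real \<times> real \<Rightarrow> complex) \<Rightarrow> bool" where
  "smooth_bounded_periodic a \<longleftrightarrow>
     (\<exists>F :: nat \<Rightarrow> nat \<Rightarrow> real \<times> real \<Rightarrow> complex.
        F 0 0 = a \<and>
        (\<forall>i j p. (F i j has_derivative
                   (\<lambda>h. fst h *\<^sub>R F (Suc i) j p + snd h *\<^sub>R F i (Suc j) p)) (at p)) \<and>
        (\<forall>i j. bounded (range (F i j)))) \<and>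
     (\<forall>x y. a (x + 1, y) = a (x, y) \<and> a (x, y + 1) = a (x, y))"

definition L2 :: "(real \<Rightarrow> complex) \<Rightarrow> bool" where
  "L2 f \<longleftrightarrow> f \<in> borel_measurable lborel \<and> integrable lborel (\<lambda>x. (cmod (f x))\<^sup>2)"

definition L2_norm :: "(real \<Rightarrow> complex) \<Rightarrow> real" where
  "L2_norm f = sqrt (LINT x|lborel. (cmod (f x))\<^sup>2)"

definition L2_inner :: "(real \<Rightarrow> complex) \<Rightarrow> (real \<Rightarrow> complex) \<Rightarrow> complex" where
  "L2_inner f g = (LINT x|lborel. f x * cnj (g x))"

text \<open>Test functions: smooth, compactly supported; Phi k is the k-th derivative.\<close>
definition test_function :: "(nat \<Rightarrow> real \<Rightarrow> real) \<Rightarrow> bool" where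
  "test_function Phi \<longleftrightarrow>
     (\<forall>k x. (Phi k has_real_derivative Phi (Suc k) x) (at x)) \<and>
     (\<exists>R. \<forall>x. \<bar>x\<bar> > R \<longrightarrow> Phi 0 x = 0)"

text \<open>sobolev m f D: f is in H^m(R), and D k (k \<le> m) is its k-th weak derivative (D 0 = f).\<close>
definition sobolev :: "nat \<Rightarrow> (real \<Rightarrow> complex) \<Rightarrow> (nat \<Rightarrow> real \<Rightarrow> complex) \<Rightarrow> bool" where
  "sobolev m f D \<longleftrightarrow>
     D 0 = f \<and> (\<forall>k\<le>m. L2 (D k)) \<and>
     (\<forall>Phi. test_function Phi \<longrightarrow>
        (\<forall>k\<le>m. (LINT x|lborel. f x * complex_of_real (Phi k x))
                 = (-1) ^ k * (LINT x|lborel. D k x * complex_of_real (Phi 0 x))))"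

definition opA :: "(nat \<Rightarrow> real \<times> real \<Rightarrow> complex) \<Rightarrow> nat \<Rightarrow> real \<Rightarrow> (nat \<Rightarrow> real \<Rightarrow> complex)
                   \<Rightarrow> real \<Rightarrow> complex" where
  "opA a m \<theta> D x = (\<Sum>k\<le>m. a k (x, \<theta> * x) * D k x)"

text \<open>Self-adjointness of A_theta with domain H^m(R) in L^2(R): symmetric, and the adjoint's
  domain is contained in H^m(R).\<close>
definition self_adjoint_op :: "(nat \<Rightarrow> real \<times> real \<Rightarrow> complex) \<Rightarrow> nat \<Rightarrow> real \<Rightarrow> bool" where
  "self_adjoint_op a m \<theta> \<longleftrightarrow>
     (\<forall>f Df g Dg. sobolev m f Df \<longrightarrow> sobolev m g Dg \<longrightarrow>
        L2_inner (opA a m \<theta> Df) g = L2_inner f (opA a m \<theta> Dg)) \<and>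
     (\<forall>g h. L2 g \<longrightarrow> L2 h \<longrightarrow>
        (\<forall>f Df. sobolev m f Df \<longrightarrow> L2_inner (opA a m \<theta> Df) g = L2_inner f h) \<longrightarrow>
        (\<exists>Dg. sobolev m g Dg))"

definition elliptic_op :: "(nat \<Rightarrow> real \<times> real \<Rightarrow> complex) \<Rightarrow> nat \<Rightarrow> bool" where
  "elliptic_op a m \<longleftrightarrow> (\<forall>p. a m p \<noteq> 0)"

text \<open>Resolvent set: A_theta - lambda : H^m \<rightarrow> L^2 is bijective (modulo a.e. equality)
  with bounded inverse.\<close>
definition resolvent_set_op :: "(nat \<Rightarrow> real \<times> real \<Rightarrow> complex) \<Rightarrow> nat \<Rightarrow> real \<Rightarrow> complex set" where
  "resolvent_set_op a m \<theta> =
     {\<mu>. (\<forall>g. L2 g \<longrightarrow> (\<exists>f Df. sobolev m f Df \<and>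
              (AE x in lborel. opA a m \<theta> Df x - \<mu> * f x = g x))) \<and>
         (\<exists>C. \<forall>f Df. sobolev m f Df \<longrightarrow>
              L2_norm f \<le> C * L2_norm (\<lambda>x. opA a m \<theta> Df x - \<mu> * f x))}"

definition spectrum_op :: "(nat \<Rightarrow> real \<times> real \<Rightarrow> complex) \<Rightarrow> nat \<Rightarrow> real \<Rightarrow> complex set" where
  "spectrum_op a m \<theta> = - resolvent_set_op a m \<theta>"

end

theory Submission
  imports Defs "HOL-Computational_Algebra.Polynomial"
begin


lemma L2_meas: "L2 f \<Longrightarrow> f \<in> borel_measurable borel"
  by (simp add: L2_def)

lemma L2_sq_int: "L2 f \<Longrightarrow> integrable lborel (\<lambda>x. (cmod (f x))\<^sup>2)"
  by (simp add: L2_def)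

lemma L2_prod_int:
  assumes "L2 f" "L2 g"
  shows "integrable lborel (\<lambda>x. f x * g x)"
proof (rule Bochner_Integration.integrable_bound[where f="\<lambda>x. ((cmod (f x))\<^sup>2 + (cmod (g x))\<^sup>2)"])
  show "integrable lborel (\<lambda>x. ((cmod (f x))\<^sup>2 + (cmod (g x))\<^sup>2))"
    using L2_sq_int[OF assms(1)] L2_sq_int[OF assms(2)] by auto
  show "(\<lambda>x. f x * g x) \<in> borel_measurable lborel" using L2_meas[OF assms(1)] L2_meas[OF assms(2)] by simp
  show "AE x in lborel. norm (f x * g x) \<le> norm (((cmod (f x))\<^sup>2 + (cmod (g x))\<^sup>2))"
  proof (rule AE_I2)
    fix x
    have "cmod (f x) * cmod (g x) \<le> (cmod (f x))\<^sup>2 + (cmod (g x))\<^sup>2"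
      using sum_squares_bound[of "cmod (f x)" "cmod (g x)"] mult_nonneg_nonneg[OF norm_ge_zero norm_ge_zero, of "f x" "g x"] by linarith
    then show "norm (f x * g x) \<le> norm (((cmod (f x))\<^sup>2 + (cmod (g x))\<^sup>2))"
      by (simp add: norm_mult)
  qed
qed

lemma L2_cnj: "L2 f \<Longrightarrow> L2 (\<lambda>x. cnj (f x))"
  unfolding L2_def by (auto intro: measurable_compose[OF _ borel_measurable_continuous_onI[OF continuous_on_cnj]])

lemma L2_inner_int: "L2 f \<Longrightarrow> L2 g \<Longrightarrow> integrable lborel (\<lambda>x. f x * cnj (g x))"
  using L2_prod_int L2_cnj by blast

lemma L2_add: assumes "L2 f" "L2 g" shows "L2 (\<lambda>x. f x + g x)"
  unfolding L2_def
proof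
  show "(\<lambda>x. f x + g x) \<in> borel_measurable lborel" using L2_meas[OF assms(1)] L2_meas[OF assms(2)] by simp
  show "integrable lborel (\<lambda>x. (cmod (f x + g x))\<^sup>2)"
  proof (rule Bochner_Integration.integrable_bound[where f="\<lambda>x. 2 * (cmod (f x))\<^sup>2 + 2 * (cmod (g x))\<^sup>2"])
    show "integrable lborel (\<lambda>x. 2 * (cmod (f x))\<^sup>2 + 2 * (cmod (g x))\<^sup>2)"
      using L2_sq_int[OF assms(1)] L2_sq_int[OF assms(2)] by auto
    show "(\<lambda>x. (cmod (f x + g x))\<^sup>2) \<in> borel_measurable lborel" using L2_meas[OF assms(1)] L2_meas[OF assms(2)] by simp
    show "AE x in lborel. norm ((cmod (f x + g x))\<^sup>2) \<le> norm (2 * (cmod (f x))\<^sup>2 + 2 * (cmod (g x))\<^sup>2)"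
    proof (rule AE_I2)
      fix x
      have "cmod (f x + g x) \<le> cmod (f x) + cmod (g x)" by (rule norm_triangle_ineq)
      hence "(cmod (f x + g x))\<^sup>2 \<le> (cmod (f x) + cmod (g x))\<^sup>2"
        by (simp add: power_mono)
      also have "\<dots> \<le> 2 * (cmod (f x))\<^sup>2 + 2 * (cmod (g x))\<^sup>2"
        using sum_squares_bound[of "cmod (f x)" "cmod (g x)"] unfolding power2_sum by linarith
      finally show "norm ((cmod (f x + g x))\<^sup>2) \<le> norm (2 * (cmod (f x))\<^sup>2 + 2 * (cmod (g x))\<^sup>2)"
        by simp
    qed
  qed
qed

lemma L2_cmult: assumes "L2 f" shows "L2 (\<lambda>x. c * f x)"
  using assms L2_sq_int[OF assms] unfolding L2_def by (simp add: norm_mult power_mult_distrib)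

lemma L2_uminus: "L2 f \<Longrightarrow> L2 (\<lambda>x. - f x)"
  using L2_cmult[of f "-1"] by simp

lemma L2_diff: "L2 f \<Longrightarrow> L2 g \<Longrightarrow> L2 (\<lambda>x. f x - g x)"
  using L2_add[of f "\<lambda>x. - g x"] L2_uminus by simp

lemma L2_zero: "L2 (\<lambda>x. 0)"
  by (simp add: L2_def)

lemma L2_bounded_mult:
  assumes "L2 f" "c \<in> borel_measurable lborel" "\<And>x. cmod (c x) \<le> M"
  shows "L2 (\<lambda>x. c x * f x)"
  unfolding L2_def
proof
  show "(\<lambda>x. c x * f x) \<in> borel_measurable lborel" using L2_meas[OF assms(1)] assms(2) by simp
  show "integrable lborel (\<lambda>x. (cmod (c x * f x))\<^sup>2)"
  proof (rule Bochner_Integration.integrable_bound[where f="\<lambda>x. M\<^sup>2 * (cmod (f x))\<^sup>2"])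
    show "integrable lborel (\<lambda>x. M\<^sup>2 * (cmod (f x))\<^sup>2)" using L2_sq_int[OF assms(1)] by auto
    show "(\<lambda>x. (cmod (c x * f x))\<^sup>2) \<in> borel_measurable lborel" using L2_meas[OF assms(1)] assms(2) by simp
    show "AE x in lborel. norm ((cmod (c x * f x))\<^sup>2) \<le> norm (M\<^sup>2 * (cmod (f x))\<^sup>2)"
    proof (rule AE_I2)
      fix x
      have "cmod (c x) * cmod (f x) \<le> M * cmod (f x)" using assms(3)[of x] by (simp add: mult_right_mono)
      hence "(cmod (c x) * cmod (f x))\<^sup>2 \<le> (M * cmod (f x))\<^sup>2"
        by (simp add: power_mono)
      then show "norm ((cmod (c x * f x))\<^sup>2) \<le> norm (M\<^sup>2 * (cmod (f x))\<^sup>2)"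
        by (simp add: norm_mult power_mult_distrib)
    qed
  qed
qed

lemma L2_sum: "(\<And>k. k \<in> S \<Longrightarrow> L2 (f k)) \<Longrightarrow> L2 (\<lambda>x. \<Sum>k\<in>S. f k x)"
proof (induction S rule: infinite_finite_induct)
  case (infinite A) then show ?case by (simp add: L2_zero)
next
  case empty then show ?case by (simp add: L2_zero)
next
  case (insert x F) then show ?case by (simp add: L2_add)
qed

lemma L2_inner_add_left:
  "L2 f \<Longrightarrow> L2 g \<Longrightarrow> L2 h \<Longrightarrow> L2_inner (\<lambda>x. f x + g x) h = L2_inner f h + L2_inner g h"
  unfolding L2_inner_def using L2_inner_int[of f h] L2_inner_int[of g h]
  by (simp add: distrib_right)

lemma L2_inner_add_right:
  "L2 f \<Longrightarrow> L2 g \<Longrightarrow> L2 h \<Longrightarrow> L2_inner h (\<lambda>x. f x + g x) = L2_inner h f + L2_inner h g"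
  unfolding L2_inner_def using L2_inner_int[of h f] L2_inner_int[of h g]
  by (simp add: distrib_left)

lemma L2_inner_scale_left: "L2_inner (\<lambda>x. c * f x) h = c * L2_inner f h"
  unfolding L2_inner_def by (simp add: mult.assoc)

lemma L2_inner_scale_right: "L2_inner h (\<lambda>x. c * f x) = cnj c * L2_inner h f"
proof -
  have "(\<lambda>x. h x * cnj (c * f x)) = (\<lambda>x. cnj c * (h x * cnj (f x)))" by (auto simp: fun_eq_iff)
  then show ?thesis unfolding L2_inner_def by simp
qed

lemma L2_inner_cnj: "L2_inner g f = cnj (L2_inner f g)"
  unfolding L2_inner_def by (subst Bochner_Integration.integral_cnj[symmetric]) (simp add: mult.commute)

lemma L2_inner_uminus_left: "L2_inner (\<lambda>x. - f x) h = - L2_inner f h"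
  using L2_inner_scale_left[of "-1" f h] by simp

lemma L2_inner_uminus_right: "L2_inner h (\<lambda>x. - f x) = - L2_inner h f"
  using L2_inner_scale_right[of h "-1" f] by simp

lemma L2_inner_diff_left:
  "L2 f \<Longrightarrow> L2 g \<Longrightarrow> L2 h \<Longrightarrow> L2_inner (\<lambda>x. f x - g x) h = L2_inner f h - L2_inner g h"
  using L2_inner_add_left[of f "\<lambda>x. - g x" h] L2_uminus[of g] L2_inner_uminus_left[of g h] by simp

lemma L2_inner_diff_right:
  "L2 f \<Longrightarrow> L2 g \<Longrightarrow> L2 h \<Longrightarrow> L2_inner h (\<lambda>x. f x - g x) = L2_inner h f - L2_inner h g"
  using L2_inner_add_right[of f "\<lambda>x. - g x" h] L2_uminus[of g] L2_inner_uminus_right[of h g] by simp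

lemma L2_norm_sq_int: "L2 f \<Longrightarrow> (L2_norm f)\<^sup>2 = (LINT x|lborel. (cmod (f x))\<^sup>2)"
  unfolding L2_norm_def by (simp add: integral_nonneg_AE)

lemma L2_norm_nonneg: "0 \<le> L2_norm f"
  unfolding L2_norm_def by simp

lemma L2_inner_self: "L2 f \<Longrightarrow> L2_inner f f = complex_of_real ((L2_norm f)\<^sup>2)"
proof -
  assume f: "L2 f"
  have "L2_inner f f = (LINT x|lborel. complex_of_real ((cmod (f x))\<^sup>2))"
    unfolding L2_inner_def by (simp only: complex_norm_square)
  also have "\<dots> = complex_of_real (LINT x|lborel. (cmod (f x))\<^sup>2)" by (rule integral_complex_of_real)
  finally show ?thesis using L2_norm_sq_int[OF f] by simp
qed

lemma L2_norm_sq_expand: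
  assumes "L2 f" "L2 g"
  shows "(L2_norm (\<lambda>x. f x + s * g x))\<^sup>2 = (L2_norm f)\<^sup>2 + 2 * Re (cnj s * L2_inner f g) + (cmod s)\<^sup>2 * (L2_norm g)\<^sup>2"
proof -
  have sg: "L2 (\<lambda>x. s * g x)" using assms(2) by (rule L2_cmult)
  have fs: "L2 (\<lambda>x. f x + s * g x)" using assms(1) sg by (rule L2_add)
  have "complex_of_real ((L2_norm (\<lambda>x. f x + s * g x))\<^sup>2) = L2_inner (\<lambda>x. f x + s * g x) (\<lambda>x. f x + s * g x)"
    using L2_inner_self[OF fs] by simp
  also have "\<dots> = L2_inner f f + L2_inner f (\<lambda>x. s * g x) + (L2_inner (\<lambda>x. s * g x) f + L2_inner (\<lambda>x. s * g x) (\<lambda>x. s * g x))"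
    using assms sg fs by (simp add: L2_inner_add_left L2_inner_add_right)
  also have "\<dots> = L2_inner f f + cnj s * L2_inner f g + (s * cnj (L2_inner f g) + s * cnj s * L2_inner g g)"
    by (simp add: L2_inner_scale_left L2_inner_scale_right L2_inner_cnj[of g f] mult.assoc)
  also have "\<dots> = complex_of_real ((L2_norm f)\<^sup>2 + 2 * Re (cnj s * L2_inner f g) + (cmod s)\<^sup>2 * (L2_norm g)\<^sup>2)"
  proof -
    have "cnj s * L2_inner f g + s * cnj (L2_inner f g) = complex_of_real (2 * Re (cnj s * L2_inner f g))"
      by (simp add: complex_eq_iff)
    moreover have "s * cnj s = complex_of_real ((cmod s)\<^sup>2)" by (rule complex_norm_square[symmetric])
    ultimately show ?thesis using L2_inner_self[OF assms(1)] L2_inner_self[OF assms(2)]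
      by (simp add: algebra_simps)
  qed
  finally show ?thesis by (simp only: of_real_eq_iff)
qed

lemma L2_cauchy_schwarz:
  assumes "L2 f" "L2 g"
  shows "cmod (L2_inner f g) \<le> L2_norm f * L2_norm g"
proof -
  define w where "w = L2_inner f g"
  have key0: "0 \<le> (L2_norm f)\<^sup>2 + 2 * (- t * (cmod w)\<^sup>2) + t\<^sup>2 * (cmod w)\<^sup>2 * (L2_norm g)\<^sup>2" for t :: real
  proof -
    have "(L2_norm (\<lambda>x. f x + (- (complex_of_real t * w)) * g x))\<^sup>2 =
        (L2_norm f)\<^sup>2 + 2 * Re (cnj (- (complex_of_real t * w)) * w) + (cmod (- (complex_of_real t * w)))\<^sup>2 * (L2_norm g)\<^sup>2"
      using L2_norm_sq_expand[OF assms, of "- (complex_of_real t * w)"] w_def by simp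
    also have "Re (cnj (- (complex_of_real t * w)) * w) = - t * (cmod w)\<^sup>2"
    proof -
      have "cnj (- (complex_of_real t * w)) * w = - complex_of_real t * (w * cnj w)" by simp
      also have "\<dots> = complex_of_real (- t * (cmod w)\<^sup>2)" by (simp only: complex_norm_square[symmetric] of_real_mult of_real_minus)
      finally have e: "cnj (- (complex_of_real t * w)) * w = complex_of_real (- t * (cmod w)\<^sup>2)" .
      show ?thesis unfolding e by (rule Re_complex_of_real)
    qed
    also have "(cmod (- (complex_of_real t * w)))\<^sup>2 = t\<^sup>2 * (cmod w)\<^sup>2"
      by (simp add: norm_mult power_mult_distrib)
    finally have "(L2_norm (\<lambda>x. f x + (- (complex_of_real t * w)) * g x))\<^sup>2 = (L2_norm f)\<^sup>2 + 2 * (- t * (cmod w)\<^sup>2) + t\<^sup>2 * (cmod w)\<^sup>2 * (L2_norm g)\<^sup>2" .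
    then show ?thesis by (metis zero_le_power2)
  qed
  have key: "0 \<le> (L2_norm f)\<^sup>2 - 2 * t * (cmod w)\<^sup>2 + t\<^sup>2 * (cmod w)\<^sup>2 * (L2_norm g)\<^sup>2" for t :: real
    using key0[of t] by (simp add: algebra_simps)
  show ?thesis
  proof (cases "L2_norm g = 0")
    case True
    have "(cmod w)\<^sup>2 = 0"
    proof (rule ccontr)
      assume "(cmod w)\<^sup>2 \<noteq> 0"
      hence pos: "(cmod w)\<^sup>2 > 0" by simp
      have "0 \<le> (L2_norm f)\<^sup>2 - 2 * (((L2_norm f)\<^sup>2 + 1) / (cmod w)\<^sup>2) * (cmod w)\<^sup>2"
        using key[of "((L2_norm f)\<^sup>2 + 1) / (cmod w)\<^sup>2"] True by simp
      also have "\<dots> = - (L2_norm f)\<^sup>2 - 2" using pos by (simp add: field_simps)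
      finally show False using zero_le_power2[of "L2_norm f"] by linarith
    qed
    then show ?thesis using True w_def by simp
  next
    case False
    hence pos: "(L2_norm g)\<^sup>2 > 0" using L2_norm_nonneg[of g] by simp
    have "0 \<le> (L2_norm f)\<^sup>2 - 2 * (1 / (L2_norm g)\<^sup>2) * (cmod w)\<^sup>2 + (1 / (L2_norm g)\<^sup>2)\<^sup>2 * (cmod w)\<^sup>2 * (L2_norm g)\<^sup>2"
      by (rule key)
    also have "\<dots> = (L2_norm f)\<^sup>2 - (cmod w)\<^sup>2 / (L2_norm g)\<^sup>2"
      using pos by (simp add: field_simps power2_eq_square)
    finally have "(cmod w)\<^sup>2 \<le> (L2_norm f)\<^sup>2 * (L2_norm g)\<^sup>2"
      using pos by (simp add: field_simps)
    hence "(cmod w)\<^sup>2 \<le> (L2_norm f * L2_norm g)\<^sup>2" by (simp add: power_mult_distrib)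
    then show ?thesis using w_def
      by (meson L2_norm_nonneg mult_nonneg_nonneg power2_le_imp_le)
  qed
qed

lemma L2_norm_triangle:
  assumes "L2 f" "L2 g"
  shows "L2_norm (\<lambda>x. f x + g x) \<le> L2_norm f + L2_norm g"
proof -
  have "(L2_norm (\<lambda>x. f x + g x))\<^sup>2 = (L2_norm f)\<^sup>2 + 2 * Re (L2_inner f g) + (L2_norm g)\<^sup>2"
    using L2_norm_sq_expand[OF assms, of 1] by simp
  also have "Re (L2_inner f g) \<le> L2_norm f * L2_norm g"
    using L2_cauchy_schwarz[OF assms] complex_Re_le_cmod order_trans by blast
  hence "(L2_norm f)\<^sup>2 + 2 * Re (L2_inner f g) + (L2_norm g)\<^sup>2 \<le> (L2_norm f + L2_norm g)\<^sup>2"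
    by (simp add: power2_sum)
  finally show ?thesis
    using L2_norm_nonneg by (meson add_nonneg_nonneg power2_le_imp_le)
qed

lemma L2_norm_scale: "L2_norm (\<lambda>x. c * f x) = cmod c * L2_norm f"
  unfolding L2_norm_def by (simp add: norm_mult power_mult_distrib real_sqrt_mult)

lemma L2_norm_uminus: "L2_norm (\<lambda>x. - f x) = L2_norm f"
  unfolding L2_norm_def by simp

lemma L2_norm_commute: "L2_norm (\<lambda>x. f x - g x) = L2_norm (\<lambda>x. g x - f x)"
  unfolding L2_norm_def by (simp add: norm_minus_commute)

lemma L2_norm_triangle_diff:
  assumes "L2 f" "L2 g" "L2 h"
  shows "L2_norm (\<lambda>x. f x - h x) \<le> L2_norm (\<lambda>x. f x - g x) + L2_norm (\<lambda>x. g x - h x)"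
  using L2_norm_triangle[OF L2_diff[OF assms(1,2)] L2_diff[OF assms(2,3)]] by simp

lemma L2_norm_zero_iff: "L2 f \<Longrightarrow> L2_norm f = 0 \<longleftrightarrow> (AE x in lborel. f x = 0)"
proof -
  assume f: "L2 f"
  have "L2_norm f = 0 \<longleftrightarrow> (LINT x|lborel. (cmod (f x))\<^sup>2) = 0"
    using L2_norm_sq_int[OF f] L2_norm_nonneg[of f] by (metis power_zero_numeral zero_eq_power2)
  also have "\<dots> \<longleftrightarrow> (AE x in lborel. (cmod (f x))\<^sup>2 = 0)"
    by (rule integral_nonneg_eq_0_iff_AE) (use L2_sq_int[OF f] in auto)
  finally show ?thesis by simp
qed

lemma L2_AE_norm_eq:
  assumes "L2 f" "L2 g" "AE x in lborel. f x = g x"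
  shows "L2_norm f = L2_norm g"
proof -
  have "(LINT x|lborel. (cmod (f x))\<^sup>2) = (LINT x|lborel. (cmod (g x))\<^sup>2)"
    by (rule integral_cong_AE) (use assms L2_meas in auto)
  then show ?thesis unfolding L2_norm_def by simp
qed

lemma L2_AE_inner_eq_left:
  assumes "L2 f" "L2 g" "L2 h" "AE x in lborel. f x = g x"
  shows "L2_inner f h = L2_inner g h"
  unfolding L2_inner_def
  by (rule integral_cong_AE) (use assms L2_meas L2_cnj in auto)

lemma L2_AE_inner_eq_right:
  assumes "L2 f" "L2 g" "L2 h" "AE x in lborel. f x = g x"
  shows "L2_inner h f = L2_inner h g"
  using L2_AE_inner_eq_left[OF assms] L2_inner_cnj by metis

lemma L2_norm_diff_zero_AE:
  assumes "L2 f" "L2 g" "L2_norm (\<lambda>x. f x - g x) = 0"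
  shows "AE x in lborel. f x = g x"
  using L2_norm_zero_iff[OF L2_diff[OF assms(1,2)]] assms(3) by auto

lemma L2_inner_zero_right: "L2_inner f (\<lambda>x. 0) = 0"
  unfolding L2_inner_def by simp

lemma L2_inner_zero_left: "L2_inner (\<lambda>x. 0) f = 0"
  unfolding L2_inner_def by simp

lemma L2_norm_zero: "L2_norm (\<lambda>x. 0) = 0"
  unfolding L2_norm_def by simp


lemma L2_inner_tendsto_left:
  assumes L: "\<And>k. L2 (f k)" "L2 F" "L2 g" and c: "(\<lambda>k. L2_norm (\<lambda>x. f k x - F x)) \<longlonglongrightarrow> 0"
  shows "(\<lambda>k. L2_inner (f k) g) \<longlonglongrightarrow> L2_inner F g"
proof -
  have "(\<lambda>k. L2_inner (f k) g - L2_inner F g) \<longlonglongrightarrow> 0"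
  proof (rule Lim_null_comparison)
    show "\<forall>\<^sub>F k in sequentially. norm (L2_inner (f k) g - L2_inner F g) \<le> L2_norm (\<lambda>x. f k x - F x) * L2_norm g"
    proof (rule always_eventually, rule allI)
      fix k
      have "L2_inner (f k) g - L2_inner F g = L2_inner (\<lambda>x. f k x - F x) g"
        using L by (simp add: L2_inner_diff_left)
      then show "norm (L2_inner (f k) g - L2_inner F g) \<le> L2_norm (\<lambda>x. f k x - F x) * L2_norm g"
        using L2_cauchy_schwarz[OF L2_diff[OF L(1) L(2)] L(3)] by simp
    qed
    show "(\<lambda>k. L2_norm (\<lambda>x. f k x - F x) * L2_norm g) \<longlonglongrightarrow> 0"
      using tendsto_mult_left_zero[OF c] by simp
  qed
  then show ?thesis by (simp add: LIM_zero_iff)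
qed

lemma L2_inner_tendsto_right:
  assumes L: "\<And>k. L2 (f k)" "L2 F" "L2 g" and c: "(\<lambda>k. L2_norm (\<lambda>x. f k x - F x)) \<longlonglongrightarrow> 0"
  shows "(\<lambda>k. L2_inner g (f k)) \<longlonglongrightarrow> L2_inner g F"
proof -
  have "(\<lambda>k. cnj (L2_inner (f k) g)) \<longlonglongrightarrow> cnj (L2_inner F g)"
    by (rule tendsto_cnj[OF L2_inner_tendsto_left[OF assms]])
  then show ?thesis by (simp add: L2_inner_cnj[of g])
qed

lemma L2_norm_tendsto:
  assumes L: "\<And>k. L2 (f k)" "L2 F" and c: "(\<lambda>k. L2_norm (\<lambda>x. f k x - F x)) \<longlonglongrightarrow> 0"
  shows "(\<lambda>k. L2_norm (f k)) \<longlonglongrightarrow> L2_norm F"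
proof -
  have "(\<lambda>k. L2_norm (f k) - L2_norm F) \<longlonglongrightarrow> 0"
  proof (rule Lim_null_comparison)
    show "\<forall>\<^sub>F k in sequentially. norm (L2_norm (f k) - L2_norm F) \<le> L2_norm (\<lambda>x. f k x - F x)"
    proof (rule always_eventually, rule allI)
      fix k
      have a: "L2_norm (f k) \<le> L2_norm (\<lambda>x. f k x - F x) + L2_norm F"
        using L2_norm_triangle[OF L2_diff[OF L(1)[of k] L(2)] L(2)] by simp
      have b: "L2_norm F \<le> L2_norm (\<lambda>x. F x - f k x) + L2_norm (f k)"
        using L2_norm_triangle[OF L2_diff[OF L(2) L(1)[of k]] L(1)[of k]] by simp
      show "norm (L2_norm (f k) - L2_norm F) \<le> L2_norm (\<lambda>x. f k x - F x)"
        using a b L2_norm_commute[of F "f k"] by simp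
    qed
  qed (rule c)
  then show ?thesis by (simp add: LIM_zero_iff)
qed


lemma L2_indicator_Icc: "L2 (\<lambda>x. complex_of_real (indicator {a..b} x))"
proof -
  have "integrable lborel (\<lambda>x. indicator {a..b} x :: real)"
    by (simp add: integrable_indicator_iff emeasure_lborel_Icc_eq)
  moreover have "(\<lambda>x. (cmod (complex_of_real (indicator {a..b} x)))\<^sup>2) = (\<lambda>x. indicator {a..b} x :: real)"
    by (auto simp: fun_eq_iff indicator_def)
  ultimately show ?thesis unfolding L2_def by simp
qed

lemma L2_of_real_cmod: "L2 f \<Longrightarrow> L2 (\<lambda>x. complex_of_real (cmod (f x)))"
proof -
  assume f: "L2 f"
  have [measurable]: "f \<in> borel_measurable borel" by (rule L2_meas[OF f])
  have "(\<lambda>x. complex_of_real (cmod (f x))) \<in> borel_measurable borel" by measurable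
  then show ?thesis using f unfolding L2_def by simp
qed

lemma L2_norm_of_real_cmod: "L2_norm (\<lambda>x. complex_of_real (cmod (f x))) = L2_norm f"
  unfolding L2_norm_def by simp

lemma L2_local_L1_bound:
  assumes "L2 f"
  shows "(\<integral>\<^sup>+x. ennreal (cmod (f x) * indicator {a..b} x) \<partial>lborel)
          \<le> ennreal (L2_norm f * L2_norm (\<lambda>x. complex_of_real (indicator {a..b} x)))"
proof -
  let ?u = "\<lambda>x. complex_of_real (cmod (f x))"
  let ?v = "\<lambda>x. complex_of_real (indicator {a..b} x)"
  have Lu: "L2 ?u" by (rule L2_of_real_cmod[OF assms])
  have Lv: "L2 ?v" by (rule L2_indicator_Icc)
  have int: "integrable lborel (\<lambda>x. cmod (f x) * indicator {a..b} x)"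
  proof -
    have "integrable lborel (\<lambda>x. ?u x * cnj (?v x))" by (rule L2_inner_int[OF Lu Lv])
    then have "integrable lborel (\<lambda>x. Re (?u x * cnj (?v x)))" by (rule integrable_Re)
    then show ?thesis by simp
  qed
  have "(\<integral>\<^sup>+x. ennreal (cmod (f x) * indicator {a..b} x) \<partial>lborel) = ennreal (LINT x|lborel. cmod (f x) * indicator {a..b} x)"
    by (rule nn_integral_eq_integral[OF int]) simp
  also have "(LINT x|lborel. cmod (f x) * indicator {a..b} x) \<le> L2_norm f * L2_norm ?v"
  proof -
  have "(LINT x|lborel. cmod (f x) * indicator {a..b} x) = Re (L2_inner ?u ?v)"
  proof -
    have "Re (L2_inner ?u ?v) = (LINT x|lborel. Re (?u x * cnj (?v x)))"
      unfolding L2_inner_def by (rule integral_Re[symmetric, OF L2_inner_int[OF Lu Lv]])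
    then show ?thesis by simp
  qed
  also have "Re (L2_inner ?u ?v) \<le> L2_norm ?u * L2_norm ?v"
    using L2_cauchy_schwarz[OF Lu Lv] complex_Re_le_cmod order_trans by blast
  finally show ?thesis by (simp add: L2_norm_of_real_cmod)
  qed
  finally show ?thesis by (simp add: ennreal_leI)
qed

lemma L2_complete:
  assumes L: "\<And>k. L2 (f k)"
    and C: "\<And>e. e > 0 \<Longrightarrow> \<exists>N. \<forall>j\<ge>N. \<forall>k\<ge>N. L2_norm (\<lambda>x. f j x - f k x) < e"
  shows "\<exists>F. L2 F \<and> (\<lambda>k. L2_norm (\<lambda>x. f k x - F x)) \<longlonglongrightarrow> 0"
proof -
  from C obtain N where N: "\<And>e j k. e > 0 \<Longrightarrow> j \<ge> N e \<Longrightarrow> k \<ge> N e \<Longrightarrow> L2_norm (\<lambda>x. f j x - f k x) < e"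
    by metis
  define r where "r = rec_nat (N 1) (\<lambda>i ri. max (N ((1/2)^(Suc i))) (Suc ri))"
  have r0: "r 0 = N 1" and rS: "\<And>i. r (Suc i) = max (N ((1/2)^(Suc i))) (Suc (r i))"
    by (simp_all add: r_def)
  have rN: "N ((1/2)^i) \<le> r i" for i by (cases i) (simp_all add: r0 rS)
  have "strict_mono r" unfolding strict_mono_Suc_iff using rS by (auto simp: less_max_iff_disj)
  then have rge: "i \<le> r i" for i by (rule seq_suble)
  define g where "g i = f (r i)" for i
  have Lg: "L2 (g i)" for i unfolding g_def by (rule L)
  have step: "L2_norm (\<lambda>x. g (Suc i) x - g i x) < (1/2)^i" for i
    unfolding g_def by (rule N) (use rN[of i] rS[of i] in auto)
  define d where "d i x = cmod (g (Suc i) x - g i x)" for i x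
  have dmeas: "d i \<in> borel_measurable lborel" for i
    unfolding d_def using L2_meas[OF Lg[of i]] L2_meas[OF Lg[of "Suc i"]] by simp
  have AEsum: "AE x in lborel. summable (\<lambda>i. d i x)"
  proof -
    have R: "AE x in lborel. x \<in> {- real R..real R} \<longrightarrow> summable (\<lambda>i. d i x)" for R :: nat
    proof -
      define c where "c = L2_norm (\<lambda>x. complex_of_real (indicator {- real R..real R} x))"
      have c0: "0 \<le> c" unfolding c_def by (rule L2_norm_nonneg)
      have b: "(\<integral>\<^sup>+x. ennreal (d i x * indicator {- real R..real R} x) \<partial>lborel) \<le> ennreal ((1/2)^i * c)" for i
      proof -
        have "(\<integral>\<^sup>+x. ennreal (d i x * indicator {- real R..real R} x) \<partial>lborel)
            \<le> ennreal (L2_norm (\<lambda>x. g (Suc i) x - g i x) * c)"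
          unfolding d_def c_def by (rule L2_local_L1_bound[OF L2_diff[OF Lg Lg]])
        also have "\<dots> \<le> ennreal ((1/2)^i * c)"
          using step[of i] c0 by (simp add: mult_right_mono)
        finally show ?thesis .
      qed
      have "(\<integral>\<^sup>+x. (\<Sum>i. ennreal (d i x * indicator {- real R..real R} x)) \<partial>lborel)
           = (\<Sum>i. (\<integral>\<^sup>+x. ennreal (d i x * indicator {- real R..real R} x) \<partial>lborel))"
        by (rule nn_integral_suminf) (use dmeas in simp)
      also have "\<dots> \<le> (\<Sum>i. ennreal ((1/2)^i * c))"
        by (intro suminf_le b) auto
      also have "\<dots> = ennreal (\<Sum>i. (1/2)^i * c)"
        by (rule suminf_ennreal2) (use c0 summable_geometric[of "1/2"] in \<open>auto intro: summable_mult2\<close>)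
      finally have fin: "(\<integral>\<^sup>+x. (\<Sum>i. ennreal (d i x * indicator {- real R..real R} x)) \<partial>lborel) \<noteq> \<infinity>"
        using neq_top_trans[OF ennreal_neq_top] unfolding infinity_ennreal_def by blast
      have "AE x in lborel. (\<Sum>i. ennreal (d i x * indicator {- real R..real R} x)) \<noteq> \<infinity>"
        by (rule nn_integral_PInf_AE[OF _ fin]) (use dmeas in simp)
      then show ?thesis
      proof (rule AE_mp, intro AE_I2 impI)
        fix x assume fx: "(\<Sum>i. ennreal (d i x * indicator {- real R..real R} x)) \<noteq> \<infinity>"
          and xR: "x \<in> {- real R..real R}"
        have "(\<lambda>i. ennreal (d i x * indicator {- real R..real R} x)) = (\<lambda>i. ennreal (d i x))"
          using xR by (simp add: indicator_def)
        then have "(\<Sum>i. ennreal (d i x)) \<noteq> top" using fx by (metis infinity_ennreal_def)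
        then show "summable (\<lambda>i. d i x)"
          by (rule summable_suminf_not_top[rotated]) (simp add: d_def)
      qed
    qed
    have "AE x in lborel. \<forall>R::nat. x \<in> {- real R..real R} \<longrightarrow> summable (\<lambda>i. d i x)"
      unfolding AE_all_countable using R by blast
    then show ?thesis
    proof (rule AE_mp, intro AE_I2 impI)
      fix x assume "\<forall>R::nat. x \<in> {- real R..real R} \<longrightarrow> summable (\<lambda>i. d i x)"
      moreover have "x \<in> {- real (nat \<lceil>\<bar>x\<bar>\<rceil>)..real (nat \<lceil>\<bar>x\<bar>\<rceil>)}"
        by simp linarith
      ultimately show "summable (\<lambda>i. d i x)" by blast
    qed
  qed
  define F where "F x = lim (\<lambda>n. g n x)" for x
  have gconv: "AE x in lborel. (\<lambda>n. g n x) \<longlonglongrightarrow> F x"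
  proof (rule AE_mp[OF AEsum], intro AE_I2 impI)
    fix x assume s: "summable (\<lambda>i. d i x)"
    have "summable (\<lambda>i. g (Suc i) x - g i x)"
      by (rule summable_norm_cancel) (use s in \<open>simp add: d_def\<close>)
    then have "(\<lambda>n. \<Sum>i<n. g (Suc i) x - g i x) \<longlonglongrightarrow> (\<Sum>i. g (Suc i) x - g i x)"
      by (rule summable_LIMSEQ)
    then have "(\<lambda>n. g n x - g 0 x) \<longlonglongrightarrow> (\<Sum>i. g (Suc i) x - g i x)"
      by (subst (asm) sum_lessThan_telescope)
    then have "(\<lambda>n. g n x - g 0 x + g 0 x) \<longlonglongrightarrow> (\<Sum>i. g (Suc i) x - g i x) + g 0 x"
      by (intro tendsto_add tendsto_const)
    then have "convergent (\<lambda>n. g n x)" unfolding convergent_def by auto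
    then show "(\<lambda>n. g n x) \<longlonglongrightarrow> F x" unfolding F_def by (simp add: convergent_LIMSEQ_iff)
  qed
  have Fmeas: "F \<in> borel_measurable lborel"
    unfolding F_def using L2_meas[OF Lg] by measurable
  have main: "L2 (\<lambda>x. F x - f j x) \<and> L2_norm (\<lambda>x. F x - f j x) \<le> e" if e: "e > 0" "j \<ge> N e" for e j
  proof -
    let ?h = "\<lambda>n x. ennreal ((cmod (g n x - f j x))\<^sup>2)"
    have hmeas: "?h n \<in> borel_measurable lborel" for n
      using L2_meas[OF Lg[of n]] L2_meas[OF L[of j]] by simp
    have "(\<integral>\<^sup>+x. ennreal ((cmod (F x - f j x))\<^sup>2) \<partial>lborel) = (\<integral>\<^sup>+x. liminf (\<lambda>n. ?h n x) \<partial>lborel)"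
    proof (rule nn_integral_cong_AE, rule AE_mp[OF gconv], intro AE_I2 impI)
      fix x assume "(\<lambda>n. g n x) \<longlonglongrightarrow> F x"
      then have "(\<lambda>n. (cmod (g n x - f j x))\<^sup>2) \<longlonglongrightarrow> (cmod (F x - f j x))\<^sup>2"
        by (intro tendsto_intros)
      then have lim: "(\<lambda>n. ?h n x) \<longlonglongrightarrow> ennreal ((cmod (F x - f j x))\<^sup>2)"
        by (rule tendsto_ennrealI)
      show "ennreal ((cmod (F x - f j x))\<^sup>2) = liminf (\<lambda>n. ?h n x)"
        by (rule lim_imp_Liminf[symmetric, OF _ lim]) simp
    qed
    also have "\<dots> \<le> liminf (\<lambda>n. (\<integral>\<^sup>+x. ?h n x \<partial>lborel))"
      by (rule nn_integral_liminf) (rule hmeas)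
    also have "\<dots> \<le> ennreal (e\<^sup>2)"
    proof -
      have "liminf (\<lambda>n. (\<integral>\<^sup>+x. ?h n x \<partial>lborel)) \<le> limsup (\<lambda>n. (\<integral>\<^sup>+x. ?h n x \<partial>lborel))"
        by (rule Liminf_le_Limsup) simp
      also have "\<dots> \<le> ennreal (e\<^sup>2)"
      proof (rule Limsup_bounded, rule eventually_sequentiallyI[of "N e"])
        fix n assume n: "N e \<le> n"
        have Ln: "L2 (\<lambda>x. g n x - f j x)" by (rule L2_diff[OF Lg L])
        have "(\<integral>\<^sup>+x. ?h n x \<partial>lborel) = ennreal ((L2_norm (\<lambda>x. g n x - f j x))\<^sup>2)"
          using L2_norm_sq_int[OF Ln] L2_sq_int[OF Ln] by (simp add: nn_integral_eq_integral)
        also have "\<dots> \<le> ennreal (e\<^sup>2)"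
        proof -
          have "L2_norm (\<lambda>x. g n x - f j x) < e"
            unfolding g_def by (rule N[OF e(1)]) (use n rge[of n] e(2) in auto)
          then have "(L2_norm (\<lambda>x. g n x - f j x))\<^sup>2 \<le> e\<^sup>2"
            by (intro power_mono) (use L2_norm_nonneg in auto)
          then show ?thesis by (rule ennreal_leI)
        qed
        finally show "(\<integral>\<^sup>+x. ?h n x \<partial>lborel) \<le> ennreal (e\<^sup>2)" .
      qed
      finally show ?thesis .
    qed
    finally have bnd: "(\<integral>\<^sup>+x. ennreal ((cmod (F x - f j x))\<^sup>2) \<partial>lborel) \<le> ennreal (e\<^sup>2)" .
    then obtain v where v: "(\<integral>\<^sup>+x. ennreal ((cmod (F x - f j x))\<^sup>2) \<partial>lborel) = ennreal v" "0 \<le> v"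
    proof -
      have "(\<integral>\<^sup>+x. ennreal ((cmod (F x - f j x))\<^sup>2) \<partial>lborel) < top"
        by (rule le_less_trans[OF bnd]) simp
      then show ?thesis using that unfolding less_top_ennreal by blast
    qed
    have int: "integrable lborel (\<lambda>x. (cmod (F x - f j x))\<^sup>2)"
      by (rule integrableI_nn_integral_finite[OF _ _ v(1)]) (use Fmeas L2_meas[OF L[of j]] in auto)
    have LF: "L2 (\<lambda>x. F x - f j x)" unfolding L2_def using int Fmeas L2_meas[OF L[of j]] by simp
    have "ennreal ((L2_norm (\<lambda>x. F x - f j x))\<^sup>2) = (\<integral>\<^sup>+x. ennreal ((cmod (F x - f j x))\<^sup>2) \<partial>lborel)"
      using L2_norm_sq_int[OF LF] int by (simp add: nn_integral_eq_integral)
    with bnd have "ennreal ((L2_norm (\<lambda>x. F x - f j x))\<^sup>2) \<le> ennreal (e\<^sup>2)"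
      by simp
    then have "(L2_norm (\<lambda>x. F x - f j x))\<^sup>2 \<le> e\<^sup>2"
      using ennreal_le_iff[OF zero_le_power2[of e]] by blast
    then have "L2_norm (\<lambda>x. F x - f j x) \<le> e"
      using e by (meson less_imp_le power2_le_imp_le)
    with LF show ?thesis by simp
  qed
  obtain e0 :: real where "e0 > 0" by (meson zero_less_one)
  have LF: "L2 F"
  proof -
    have "L2 (\<lambda>x. (F x - f (N 1) x) + f (N 1) x)"
      using main[of 1 "N 1"] L[of "N 1"] by (intro L2_add) auto
    then show ?thesis by simp
  qed
  have "(\<lambda>k. L2_norm (\<lambda>x. f k x - F x)) \<longlonglongrightarrow> 0"
  proof (rule LIMSEQ_I)
    fix e :: real assume e: "e > 0"
    have "\<forall>k\<ge>N (e/2). norm (L2_norm (\<lambda>x. f k x - F x) - 0) < e"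
    proof (intro allI impI)
      fix k assume k: "k \<ge> N (e/2)"
      have "L2_norm (\<lambda>x. f k x - F x) = L2_norm (\<lambda>x. F x - f k x)" by (rule L2_norm_commute)
      also have "\<dots> \<le> e/2" using main[of "e/2" k] e k by simp
      finally show "norm (L2_norm (\<lambda>x. f k x - F x) - 0) < e" using e L2_norm_nonneg by simp
    qed
    then show "\<exists>no. \<forall>k\<ge>no. norm (L2_norm (\<lambda>x. f k x - F x) - 0) < e" by blast
  qed
  with LF show ?thesis by blast
qed


lemma test_support:
  assumes "test_function Phi"
  obtains R where "\<And>k x. \<bar>x\<bar> > R \<Longrightarrow> Phi k x = 0"
proof -
  from assms obtain R where R: "\<And>x. \<bar>x\<bar> > R \<Longrightarrow> Phi 0 x = 0"
    and D: "\<And>k x. (Phi k has_real_derivative Phi (Suc k) x) (at x)"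
    unfolding test_function_def by blast
  have "\<bar>x\<bar> > R \<Longrightarrow> Phi k x = 0" for k x
  proof (induction k arbitrary: x)
    case 0 then show ?case by (rule R)
  next
    case (Suc k)
    have "((\<lambda>_. 0) has_real_derivative Phi (Suc k) x) (at x)"
    proof (rule has_field_derivative_transform_within_open[OF D[of k x]])
      show "open {y. \<bar>y\<bar> > R}" by (intro open_Collect_less continuous_intros)
      show "x \<in> {y. \<bar>y\<bar> > R}" using Suc.prems by simp
      show "\<And>y. y \<in> {y. \<bar>y\<bar> > R} \<Longrightarrow> Phi k y = 0" using Suc.IH by simp
    qed
    then show ?case using DERIV_unique DERIV_const by metis
  qed
  then show ?thesis using that by blast
qed

lemma test_cont:
  assumes "test_function Phi"
  shows "continuous_on UNIV (Phi k)"
proof -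
  have "\<And>x. isCont (Phi k) x"
    using assms unfolding test_function_def by (meson DERIV_isCont)
  then show ?thesis by (simp add: continuous_at_imp_continuous_on)
qed

lemma test_L2:
  assumes "test_function Phi"
  shows "L2 (\<lambda>x. complex_of_real (Phi k x))"
proof -
  obtain R where R: "\<And>k x. \<bar>x\<bar> > R \<Longrightarrow> Phi k x = 0" using test_support[OF assms] by blast
  have c: "continuous_on UNIV (Phi k)" by (rule test_cont[OF assms])
  have meas: "(\<lambda>x. complex_of_real (Phi k x)) \<in> borel_measurable borel"
    by (intro borel_measurable_continuous_onI continuous_intros c[THEN continuous_on_subset]) auto
  have "integrable lborel (\<lambda>x. indicator {-R..R} x *\<^sub>R (Phi k x)\<^sup>2)"
    by (rule borel_integrable_compact) (auto intro!: continuous_intros c[THEN continuous_on_subset])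
  moreover have "(\<lambda>x. indicator {-R..R} x *\<^sub>R (Phi k x)\<^sup>2) = (\<lambda>x. (cmod (complex_of_real (Phi k x)))\<^sup>2)"
  proof
    fix x
    show "indicator {-R..R} x *\<^sub>R (Phi k x)\<^sup>2 = (cmod (complex_of_real (Phi k x)))\<^sup>2"
    proof (cases "\<bar>x\<bar> > R")
      case True then show ?thesis using R[of x k] by simp
    next
      case False then show ?thesis by (auto simp: indicator_def abs_le_iff)
    qed
  qed
  ultimately show ?thesis using meas unfolding L2_def by simp
qed

lemma test_int:
  "L2 f \<Longrightarrow> test_function Phi \<Longrightarrow> integrable lborel (\<lambda>x. f x * complex_of_real (Phi k x))"
  using L2_prod_int test_L2 by blast

lemma sobolev_L2: "sobolev m f Df \<Longrightarrow> L2 f"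
  unfolding sobolev_def by auto

lemma sobolev_L2D: "sobolev m f Df \<Longrightarrow> k \<le> m \<Longrightarrow> L2 (Df k)"
  unfolding sobolev_def by auto

lemma sobolev_D0: "sobolev m f Df \<Longrightarrow> Df 0 = f"
  unfolding sobolev_def by auto

lemma sobolev_lincomb:
  assumes f: "sobolev m f Df" and g: "sobolev m g Dg"
  shows "sobolev m (\<lambda>x. f x + c * g x) (\<lambda>k x. Df k x + c * Dg k x)"
  unfolding sobolev_def
proof (intro conjI allI impI)
  show "(\<lambda>x. Df 0 x + c * Dg 0 x) = (\<lambda>x. f x + c * g x)"
    using sobolev_D0[OF f] sobolev_D0[OF g] by simp
  show "L2 (\<lambda>x. Df k x + c * Dg k x)" if "k \<le> m" for k
    using sobolev_L2D[OF f that] sobolev_L2D[OF g that] by (intro L2_add L2_cmult)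
  fix Phi k assume Phi: "test_function Phi" and k: "k \<le> m"
  have Lf: "L2 f" and Lg: "L2 g" using f g by (simp_all add: sobolev_L2)
  have LDf: "L2 (Df k)" and LDg: "L2 (Dg k)" using f g k by (simp_all add: sobolev_L2D)
  have wf: "(LINT x|lborel. f x * complex_of_real (Phi k x)) = (-1) ^ k * (LINT x|lborel. Df k x * complex_of_real (Phi 0 x))"
    using f Phi k unfolding sobolev_def by blast
  have wg: "(LINT x|lborel. g x * complex_of_real (Phi k x)) = (-1) ^ k * (LINT x|lborel. Dg k x * complex_of_real (Phi 0 x))"
    using g Phi k unfolding sobolev_def by blast
  have "(LINT x|lborel. (f x + c * g x) * complex_of_real (Phi k x))
      = (LINT x|lborel. f x * complex_of_real (Phi k x) + c * (g x * complex_of_real (Phi k x)))"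
    by (simp add: algebra_simps)
  also have "\<dots> = (LINT x|lborel. f x * complex_of_real (Phi k x)) + c * (LINT x|lborel. g x * complex_of_real (Phi k x))"
    using test_int[OF Lf Phi] test_int[OF Lg Phi] by simp
  also have "\<dots> = (-1) ^ k * ((LINT x|lborel. Df k x * complex_of_real (Phi 0 x)) + c * (LINT x|lborel. Dg k x * complex_of_real (Phi 0 x)))"
    using wf wg by (simp add: algebra_simps)
  also have "(LINT x|lborel. Df k x * complex_of_real (Phi 0 x)) + c * (LINT x|lborel. Dg k x * complex_of_real (Phi 0 x))
      = (LINT x|lborel. Df k x * complex_of_real (Phi 0 x) + c * (Dg k x * complex_of_real (Phi 0 x)))"
    using test_int[OF LDf Phi] test_int[OF LDg Phi] by simp
  also have "\<dots> = (LINT x|lborel. (Df k x + c * Dg k x) * complex_of_real (Phi 0 x))"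
    by (simp add: algebra_simps)
  finally show "(LINT x|lborel. (f x + c * g x) * complex_of_real (Phi k x)) =
       (- 1) ^ k * (LINT x|lborel. (Df k x + c * Dg k x) * complex_of_real (Phi 0 x))" .
qed

lemma sobolev_zero: "sobolev m (\<lambda>x. 0) (\<lambda>k x. 0)"
  unfolding sobolev_def by (simp add: L2_zero)

lemma sobolev_scale:
  assumes f: "sobolev m f Df"
  shows "sobolev m (\<lambda>x. c * f x) (\<lambda>k x. c * Df k x)"
  using sobolev_lincomb[OF sobolev_zero f, of c] by simp

lemma sobolev_diff:
  assumes f: "sobolev m f Df" and g: "sobolev m g Dg"
  shows "sobolev m (\<lambda>x. f x - g x) (\<lambda>k x. Df k x - Dg k x)"
  using sobolev_lincomb[OF f g, of "-1"] by simp

lemma sobolev_add: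
  assumes f: "sobolev m f Df" and g: "sobolev m g Dg"
  shows "sobolev m (\<lambda>x. f x + g x) (\<lambda>k x. Df k x + Dg k x)"
  using sobolev_lincomb[OF f g, of 1] by simp

lemma opA_lincomb: "opA a m t (\<lambda>k x. Df k x + c * Dg k x) x = opA a m t Df x + c * opA a m t Dg x"
  unfolding opA_def by (simp add: algebra_simps sum.distrib sum_distrib_left)

lemma opA_scale: "opA a m t (\<lambda>k x. c * Df k x) x = c * opA a m t Df x"
  unfolding opA_def by (simp add: algebra_simps sum_distrib_left)

lemma opA_diff: "opA a m t (\<lambda>k x. Df k x - Dg k x) x = opA a m t Df x - opA a m t Dg x"
  unfolding opA_def by (simp add: algebra_simps sum_subtractf)

lemma opA_add: "opA a m t (\<lambda>k x. Df k x + Dg k x) x = opA a m t Df x + opA a m t Dg x"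
  unfolding opA_def by (simp add: algebra_simps sum.distrib)

lemma opA_zero: "opA a m t (\<lambda>k x. 0) x = 0"
  unfolding opA_def by simp

lemma sbp_cont:
  assumes "smooth_bounded_periodic a"
  shows "continuous_on UNIV a"
proof -
  from assms obtain F where F0: "F 0 0 = a"
    and D: "\<And>p. (F 0 0 has_derivative (\<lambda>h. fst h *\<^sub>R F (Suc 0) 0 p + snd h *\<^sub>R F 0 (Suc 0) p)) (at p)"
    unfolding smooth_bounded_periodic_def by blast
  have "\<And>p. isCont a p" using has_derivative_continuous[OF D] F0 by simp
  then show ?thesis by (simp add: continuous_at_imp_continuous_on)
qed

lemma sbp_bounded:
  assumes "smooth_bounded_periodic a"
  obtains M where "\<And>p. cmod (a p) \<le> M"
proof -
  from assms obtain F :: "nat \<Rightarrow> nat \<Rightarrow> real \<times> real \<Rightarrow> complex" where F0: "F 0 0 = a" and B0: "\<forall>i j. bounded (range (F i j))"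
    unfolding smooth_bounded_periodic_def by blast
  from B0 have B: "bounded (range (F 0 0))" by blast
  then obtain M where "\<And>p. cmod (a p) \<le> M" unfolding bounded_iff using F0 by auto
  then show ?thesis using that by blast
qed

locale opsetting =
  fixes m :: nat and a :: "nat \<Rightarrow> real \<times> real \<Rightarrow> complex"
  assumes coeffs: "\<And>k. k \<le> m \<Longrightarrow> smooth_bounded_periodic (a k)"
    and selfadj: "\<And>t. self_adjoint_op a m t"
begin

definition D :: "(real \<Rightarrow> complex) \<Rightarrow> (nat \<Rightarrow> real \<Rightarrow> complex) \<Rightarrow> bool" where
  "D f Df \<longleftrightarrow> sobolev m f Df"

lemma coef_cont: "k \<le> m \<Longrightarrow> continuous_on UNIV (\<lambda>x. a k (x, t * x))"
  by (rule continuous_on_compose2[OF sbp_cont[OF coeffs]]) (auto intro!: continuous_intros)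

lemma coef_meas: "k \<le> m \<Longrightarrow> (\<lambda>x. a k (x, t * x)) \<in> borel_measurable lborel"
  unfolding measurable_lborel2 by (rule borel_measurable_continuous_onI[OF coef_cont])

lemma coef_bound: "\<exists>M. \<forall>k\<le>m. \<forall>p. cmod (a k p) \<le> M"
proof -
  have "\<forall>k\<in>{..m}. \<exists>M. \<forall>p. cmod (a k p) \<le> M"
    using sbp_bounded[OF coeffs] by (metis atMost_iff)
  then obtain M where M: "\<And>k. k \<in> {..m} \<Longrightarrow> \<forall>p. cmod (a k p) \<le> M k" by metis
  show ?thesis
    by (rule exI[of _ "Max (M ` {..m})"]) (use M in \<open>force intro: order_trans[OF _ Max_ge]\<close>)
qed

lemma opA_L2: "sobolev m f Df \<Longrightarrow> L2 (opA a m t Df)"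
proof -
  assume f: "sobolev m f Df"
  obtain M where M: "\<And>k p. k \<le> m \<Longrightarrow> cmod (a k p) \<le> M" using coef_bound by blast
  have "L2 (\<lambda>x. \<Sum>k\<le>m. a k (x, t * x) * Df k x)"
    by (rule L2_sum) (auto intro!: L2_bounded_mult[OF sobolev_L2D[OF f] coef_meas] M)
  then show ?thesis unfolding opA_def by simp
qed

end


context opsetting
begin

lemma strong_conv:
  assumes f: "sobolev m f Df" and conv: "\<theta>s \<longlonglongrightarrow> \<theta>"
  shows "(\<lambda>n. L2_norm (\<lambda>x. opA a m \<theta> Df x - opA a m (\<theta>s n) Df x)) \<longlonglongrightarrow> 0"
proof -
  obtain M where M: "\<And>k p. k \<le> m \<Longrightarrow> cmod (a k p) \<le> M" using coef_bound by blast
  define E where "E n x = opA a m \<theta> Df x - opA a m (\<theta>s n) Df x" for n x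
  have Eeq: "E n x = (\<Sum>k\<le>m. (a k (x, \<theta> * x) - a k (x, \<theta>s n * x)) * Df k x)" for n x
    unfolding E_def opA_def by (simp add: algebra_simps sum_subtractf)
  have LE: "L2 (E n)" for n
    unfolding E_def by (rule L2_diff[OF opA_L2[OF f] opA_L2[OF f]])
  define w where "w x = (\<Sum>k\<le>m. (2 * M * cmod (Df k x))\<^sup>2) * real (card {..m})" for x
  have h1: "(\<lambda>x. 0::real) \<in> borel_measurable lborel" by simp
    have h2: "(\<lambda>x. (cmod (E n x))\<^sup>2) \<in> borel_measurable lborel" for n
      using L2_meas[OF LE[of n]] by simp
    have h3: "integrable lborel w"
      unfolding w_def
      by (intro integrable_mult_left integrable_sum)
         (use L2_sq_int[OF sobolev_L2D[OF f]] in \<open>auto simp: power_mult_distrib\<close>)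
    have h4: "AE x in lborel. (\<lambda>n. (cmod (E n x))\<^sup>2) \<longlonglongrightarrow> 0"
    proof (rule AE_I2)
      fix x
      have "(\<lambda>n. E n x) \<longlonglongrightarrow> (\<Sum>k\<le>m. (a k (x, \<theta> * x) - a k (x, \<theta> * x)) * Df k x)"
        unfolding Eeq
      proof (intro tendsto_sum tendsto_mult tendsto_diff tendsto_const)
        fix k assume "k \<in> {..m}"
        then have c: "continuous_on UNIV (a k)" using sbp_cont[OF coeffs] by simp
        have l: "(\<lambda>n. (x, \<theta>s n * x)) \<longlonglongrightarrow> (x, \<theta> * x)"
          by (intro tendsto_intros conv)
        show "(\<lambda>n. a k (x, \<theta>s n * x)) \<longlonglongrightarrow> a k (x, \<theta> * x)"
          by (rule continuous_on_tendsto_compose[OF c l]) auto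
      qed
      then have E0: "(\<lambda>n. E n x) \<longlonglongrightarrow> 0" by simp
      show "(\<lambda>n. (cmod (E n x))\<^sup>2) \<longlonglongrightarrow> 0"
        using tendsto_power[OF tendsto_norm_zero[OF E0], of 2] by simp
    qed
    have h5: "AE x in lborel. norm ((cmod (E n x))\<^sup>2) \<le> w x" for n
    proof (rule AE_I2)
      fix x
      have "cmod (E n x) \<le> (\<Sum>k\<le>m. cmod ((a k (x, \<theta> * x) - a k (x, \<theta>s n * x)) * Df k x))"
        unfolding Eeq by (rule norm_sum)
      also have "\<dots> \<le> (\<Sum>k\<le>m. 2 * M * cmod (Df k x))"
      proof (rule sum_mono)
        fix k assume k: "k \<in> {..m}"
        have "cmod (a k (x, \<theta> * x) - a k (x, \<theta>s n * x)) \<le> cmod (a k (x, \<theta> * x)) + cmod (a k (x, \<theta>s n * x))"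
          by (rule norm_triangle_ineq4)
        also have "\<dots> \<le> 2 * M" using M[of k "(x, \<theta> * x)"] M[of k "(x, \<theta>s n * x)"] k by simp
        finally show "cmod ((a k (x, \<theta> * x) - a k (x, \<theta>s n * x)) * Df k x) \<le> 2 * M * cmod (Df k x)"
          by (simp add: norm_mult mult_right_mono)
      qed
      finally have b1: "cmod (E n x) \<le> (\<Sum>k\<le>m. 2 * M * cmod (Df k x))" .
      have "(cmod (E n x))\<^sup>2 \<le> (\<Sum>k\<le>m. 2 * M * cmod (Df k x))\<^sup>2"
        by (rule power_mono[OF b1 norm_ge_zero])
      also have "\<dots> \<le> w x" unfolding w_def by (rule sum_squared_le_sum_of_squares)
      finally show "norm ((cmod (E n x))\<^sup>2) \<le> w x" by simp
    qed
  have "(\<lambda>n. LINT x|lborel. (cmod (E n x))\<^sup>2) \<longlonglongrightarrow> (LINT x|lborel. (\<lambda>x. 0::real) x)"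
    using integral_dominated_convergence[of "\<lambda>x. 0::real" lborel "\<lambda>n x. (cmod (E n x))\<^sup>2" w, OF h1 h2 h3 h4 h5] by simp
  then have "(\<lambda>n. LINT x|lborel. (cmod (E n x))\<^sup>2) \<longlonglongrightarrow> 0" by simp
  then have "(\<lambda>n. sqrt (LINT x|lborel. (cmod (E n x))\<^sup>2)) \<longlonglongrightarrow> sqrt 0"
    by (rule tendsto_real_sqrt)
  then show ?thesis unfolding L2_norm_def E_def by simp
qed

end


definition clp :: "real \<Rightarrow> real" where "clp t = max 0 (min 1 t)"

lemma clp_cont: "continuous_on UNIV clp"
  unfolding clp_def by (intro continuous_intros)

lemma deriv_glue:
  fixes f :: "real \<Rightarrow> real"
  assumes "(f has_real_derivative D) (at x within {..x})" "(f has_real_derivative D) (at x within {x..})"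
  shows "(f has_real_derivative D) (at x)"
proof -
  have "((\<lambda>y. (f y - f x) / (y - x)) \<longlongrightarrow> D) (at x within {..x} \<union> {x..})"
    using assms unfolding has_field_derivative_iff by (simp add: Lim_within_Un)
  moreover have "{..x} \<union> {x..} = (UNIV :: real set)" by auto
  ultimately show ?thesis unfolding has_field_derivative_iff by simp
qed

lemma pw_deriv:
  fixes Q :: "real poly"
  assumes z0: "poly (pderiv Q) 0 = 0" and z1: "poly (pderiv Q) 1 = 0"
  shows "((\<lambda>t. poly Q (clp t)) has_real_derivative poly (pderiv Q) (clp t)) (at t)"
proof -
  consider "t < 0" | "t = 0" | "0 < t \<and> t < 1" | "t = 1" | "t > 1" by linarith
  then show ?thesis
  proof cases
    case 1
    have e: "poly (pderiv Q) (clp t) = 0" using 1 z0 by (simp add: clp_def)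
    have "((\<lambda>t. poly Q 0) has_real_derivative 0) (at t)" by simp
    then show ?thesis unfolding e
      by (rule has_field_derivative_transform_within_open[of _ _ _ "{..<0}"])
         (use 1 z0 in \<open>auto simp: clp_def\<close>)
  next
    case 5
    have e: "poly (pderiv Q) (clp t) = 0" using 5 z1 by (simp add: clp_def)
    have "((\<lambda>t. poly Q 1) has_real_derivative 0) (at t)" by simp
    then show ?thesis unfolding e
      by (rule has_field_derivative_transform_within_open[of _ _ _ "{1<..}"])
         (use 5 z1 in \<open>auto simp: clp_def\<close>)
  next
    case 3
    have e: "clp t = t" using 3 by (simp add: clp_def)
    have "((\<lambda>t. poly Q t) has_real_derivative poly (pderiv Q) t) (at t)" by (rule poly_DERIV)
    then show ?thesis unfolding e
      by (rule has_field_derivative_transform_within_open[of _ _ _ "{0<..<1}"])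
         (use 3 in \<open>auto simp: clp_def\<close>)
  next
    case 2
    have e: "clp t = 0" using 2 by (simp add: clp_def)
    show ?thesis unfolding e z0
    proof (rule deriv_glue)
      have "((\<lambda>t. poly Q 0) has_real_derivative 0) (at t within {..t})" by simp
      then show "((\<lambda>t. poly Q (clp t)) has_real_derivative 0) (at t within {..t})"
        by (rule has_field_derivative_transform_within[where d=1]) (use 2 z0 in \<open>auto simp: clp_def\<close>)
      have "((\<lambda>t. poly Q t) has_real_derivative poly (pderiv Q) t) (at t within {t..})"
        by (rule has_field_derivative_at_within[OF poly_DERIV])
      then have "((\<lambda>t. poly Q t) has_real_derivative 0) (at t within {t..})" using 2 z0 by simp
      then show "((\<lambda>t. poly Q (clp t)) has_real_derivative 0) (at t within {t..})"
        by (rule has_field_derivative_transform_within[where d=1]) (use 2 in \<open>auto simp: clp_def dist_real_def\<close>)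
    qed
  next
    case 4
    have e: "clp t = 1" using 4 by (simp add: clp_def)
    show ?thesis unfolding e z1
    proof (rule deriv_glue)
      have "((\<lambda>t. poly Q t) has_real_derivative poly (pderiv Q) t) (at t within {..t})"
        by (rule has_field_derivative_at_within[OF poly_DERIV])
      then have "((\<lambda>t. poly Q t) has_real_derivative 0) (at t within {..t})" using 4 z1 by simp
      then show "((\<lambda>t. poly Q (clp t)) has_real_derivative 0) (at t within {..t})"
        by (rule has_field_derivative_transform_within[where d=1]) (use 4 in \<open>auto simp: clp_def dist_real_def\<close>)
      have "((\<lambda>t. poly Q 1) has_real_derivative 0) (at t within {t..})" by simp
      then show "((\<lambda>t. poly Q (clp t)) has_real_derivative 0) (at t within {t..})"
        by (rule has_field_derivative_transform_within[where d=1]) (use 4 z1 in \<open>auto simp: clp_def\<close>)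
    qed
  qed
qed

lemma dvd_pderiv_power:
  fixes p r :: "real poly"
  assumes "r ^ Suc n dvd p"
  shows "r ^ n dvd pderiv p"
proof -
  from assms obtain q where p: "p = r ^ Suc n * q" by (auto simp: dvd_def)
  have "pderiv p = r ^ Suc n * pderiv q + q * (smult (of_nat (Suc n)) (r ^ n) * pderiv r)"
    unfolding p pderiv_mult pderiv_power_Suc ..
  also have "\<dots> = r ^ n * (r * pderiv q + smult (of_nat (Suc n)) (q * pderiv r))"
    by (simp add: algebra_simps)
  finally show ?thesis by simp
qed

lemma dvd_pderiv_iter:
  fixes p r :: "real poly"
  assumes "r ^ n dvd p" "i \<le> n"
  shows "r ^ (n - i) dvd (pderiv ^^ i) p"
  using assms(2)
proof (induction i)
  case 0 then show ?case using assms(1) by simp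
next
  case (Suc i)
  then have "r ^ Suc (n - Suc i) dvd (pderiv ^^ i) p" using Suc_diff_Suc by fastforce
  then show ?case using dvd_pderiv_power by simp
qed

definition Pb :: "nat \<Rightarrow> real poly" where "Pb m = ([:0, 1:] * [:1, -1:]) ^ Suc m"

lemma poly_Pb: "poly (Pb m) t = (t * (1 - t)) ^ Suc m"
proof -
  have "poly ([:0, 1:] * [:1, -1:]) t = t * (1 - t)" by (simp add: algebra_simps)
  then show ?thesis by (simp only: Pb_def poly_power)
qed

lemma Pb_vanish:
  assumes "i \<le> m"
  shows "poly ((pderiv ^^ i) (Pb m)) 0 = 0" "poly ((pderiv ^^ i) (Pb m)) 1 = 0"
proof -
  have d0: "[:0, 1:] ^ Suc m dvd Pb m" unfolding Pb_def power_mult_distrib by (rule dvd_triv_left)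
  have "[:- 1, 1:] ^ Suc m dvd ([:1, -1:] :: real poly) ^ Suc m"
  proof -
    have "([:1, -1:] :: real poly) = smult (-1) [:- 1, 1:]" by simp
    then have "([:1, -1:] :: real poly) ^ Suc m = smult ((-1) ^ Suc m) ([:- 1, 1:] ^ Suc m)" by (simp only: smult_power)
    then show ?thesis by (metis dvd_refl dvd_smult)
  qed
  then have d1: "[:- 1, 1:] ^ Suc m dvd Pb m" unfolding Pb_def power_mult_distrib by (rule dvd_mult)
  have "[:0, 1:] ^ (Suc m - i) dvd (pderiv ^^ i) (Pb m)"
    by (rule dvd_pderiv_iter[OF d0]) (use assms in simp)
  then have "[:0, 1:] dvd (pderiv ^^ i) (Pb m)"
    using assms by (metis dvd_power dvd_trans zero_less_diff less_Suc_eq_le)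
  then show "poly ((pderiv ^^ i) (Pb m)) 0 = 0" using dvd_iff_poly_eq_0[of 0 "(pderiv ^^ i) (Pb m)"] by simp
  have "[:- 1, 1:] ^ (Suc m - i) dvd (pderiv ^^ i) (Pb m)"
    by (rule dvd_pderiv_iter[OF d1]) (use assms in simp)
  then have "[:- 1, 1:] dvd (pderiv ^^ i) (Pb m)"
    using assms by (metis dvd_power dvd_trans zero_less_diff less_Suc_eq_le)
  then show "poly ((pderiv ^^ i) (Pb m)) 1 = 0" using dvd_iff_poly_eq_0[of "-1" "(pderiv ^^ i) (Pb m)"] by simp
qed

definition antider :: "real poly \<Rightarrow> real poly" where
  "antider p = Poly (0 # map (\<lambda>i. coeff p i / of_nat (Suc i)) [0..<Suc (degree p)])"

lemma pderiv_antider: "pderiv (antider p) = p"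
proof (subst poly_eq_iff, intro allI)
  fix n
  show "coeff (pderiv (antider p)) n = coeff p n"
  proof (cases "n \<le> degree p")
    case True
    then show ?thesis
      unfolding coeff_pderiv antider_def by (simp add: nth_default_def del: upt_Suc)
  next
    case False
    then show ?thesis
      unfolding coeff_pderiv antider_def by (simp add: nth_default_def coeff_eq_0 del: upt_Suc)
  qed
qed

definition Rb :: "nat \<Rightarrow> real poly" where "Rb m = antider (Pb m)"

lemma Rb_increase: "poly (Rb m) 0 < poly (Rb m) 1"
proof -
  have "\<exists>z. 0 < z \<and> z < 1 \<and> poly (Rb m) 1 - poly (Rb m) 0 = (1 - 0) * poly (pderiv (Rb m)) z"
    by (rule MVT2) auto
  then obtain z where z: "0 < z" "z < 1" "poly (Rb m) 1 - poly (Rb m) 0 = poly (Pb m) z"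
    unfolding Rb_def pderiv_antider by auto
  have "poly (Pb m) z > 0" unfolding poly_Pb using z by simp
  then show ?thesis using z by simp
qed

definition Sd :: "nat \<Rightarrow> nat \<Rightarrow> real \<Rightarrow> real" where
  "Sd m j t = poly ((pderiv ^^ j) (Rb m)) (clp t)"

lemma Sd_deriv:
  assumes "j \<le> m"
  shows "(Sd m j has_real_derivative Sd m (Suc j) t) (at t)"
proof -
  have e: "pderiv ((pderiv ^^ j) (Rb m)) = (pderiv ^^ j) (Pb m)"
    unfolding Rb_def by (induction j) (simp_all add: pderiv_antider)
  have e2: "(pderiv ^^ Suc j) (Rb m) = pderiv ((pderiv ^^ j) (Rb m))" by simp
  show ?thesis
    unfolding Sd_def e2
    by (rule pw_deriv) (simp_all only: e Pb_vanish[OF assms])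
qed

lemma Sd_cont: "continuous_on UNIV (Sd m j)"
  unfolding Sd_def
  by (rule continuous_on_compose2[OF _ clp_cont]) (auto intro: continuous_intros)

lemma Sd_left: "t \<le> 0 \<Longrightarrow> Sd m j t = poly ((pderiv ^^ j) (Rb m)) 0"
  unfolding Sd_def clp_def by simp

lemma Sd_right: "t \<ge> 1 \<Longrightarrow> Sd m j t = poly ((pderiv ^^ j) (Rb m)) 1"
  unfolding Sd_def clp_def by simp


lemma cs_L2:
  assumes c: "continuous_on UNIV g" and R: "\<And>x. \<bar>x\<bar> > L \<Longrightarrow> g x = 0"
  shows "L2 (\<lambda>x. complex_of_real (g x))"
proof -
  have meas: "(\<lambda>x. complex_of_real (g x)) \<in> borel_measurable borel"
    by (intro borel_measurable_continuous_onI continuous_intros c[THEN continuous_on_subset]) auto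
  have "integrable lborel (\<lambda>x. indicator {-L..L} x *\<^sub>R (g x)\<^sup>2)"
    by (rule borel_integrable_compact) (auto intro!: continuous_intros c[THEN continuous_on_subset])
  moreover have "(\<lambda>x. indicator {-L..L} x *\<^sub>R (g x)\<^sup>2) = (\<lambda>x. (cmod (complex_of_real (g x)))\<^sup>2)"
  proof
    fix x
    show "indicator {-L..L} x *\<^sub>R (g x)\<^sup>2 = (cmod (complex_of_real (g x)))\<^sup>2"
    proof (cases "\<bar>x\<bar> > L")
      case True then show ?thesis using R[of x] by simp
    next
      case False then show ?thesis by (auto simp: indicator_def abs_le_iff)
    qed
  qed
  ultimately show ?thesis using meas unfolding L2_def by simp
qed

lemma ibp:
  fixes u u' :: "real \<Rightarrow> real"
  assumes du: "\<And>x. (u has_real_derivative u' x) (at x)" and cu': "continuous_on UNIV u'"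
    and su: "\<And>x. \<bar>x\<bar> > L \<Longrightarrow> u x = 0" and Phi: "test_function Phi"
  shows "(LBINT x. u x * Phi (Suc j) x) = - (LBINT x. u' x * Phi j x)"
proof -
  obtain R where R: "\<And>k x. \<bar>x\<bar> > R \<Longrightarrow> Phi k x = 0" using test_support[OF Phi] by blast
  define L' where "L' = max (max L R) 0 + 1"
  have cu: "continuous_on UNIV u"
    using du by (meson DERIV_isCont continuous_at_imp_continuous_on)
  have cP: "continuous_on UNIV (Phi k)" for k by (rule test_cont[OF Phi])
  have dP: "(Phi k has_real_derivative Phi (Suc k) x) (at x)" for k x
    using Phi unfolding test_function_def by blast
  let ?G = "\<lambda>x. u x * Phi j x"
  let ?g1 = "\<lambda>x. u' x * Phi j x"
  let ?g2 = "\<lambda>x. u x * Phi (Suc j) x"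
  have FTC: "integral\<^sup>L lborel (\<lambda>x. indicator {-L'..L'} x *\<^sub>R (?g1 x + ?g2 x)) = ?G L' - ?G (-L')"
  proof (rule integral_FTC_atLeastAtMost)
    show "- L' \<le> L'" unfolding L'_def by simp
    fix x
    have "(?G has_real_derivative (u' x * Phi j x + Phi (Suc j) x * u x)) (at x)"
      by (rule DERIV_mult[OF du dP])
    then have "(?G has_real_derivative (?g1 x + ?g2 x)) (at x within {-L'..L'})"
      by (simp add: has_field_derivative_at_within mult.commute)
    then show "(?G has_vector_derivative (?g1 x + ?g2 x)) (at x within {-L'..L'})"
      by (simp add: has_real_derivative_iff_has_vector_derivative)
  next
    show "continuous_on {-L'..L'} (\<lambda>x. ?g1 x + ?g2 x)"
      by (intro continuous_intros cu'[THEN continuous_on_subset] cu[THEN continuous_on_subset]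
          cP[THEN continuous_on_subset]) auto
  qed
  have G0: "?G L' = 0" "?G (-L') = 0" using su[of L'] su[of "-L'"] unfolding L'_def by auto
  have i1: "integrable lborel (\<lambda>x. indicator {-L'..L'} x *\<^sub>R ?g1 x)"
    by (rule borel_integrable_compact) (auto intro!: continuous_intros cu'[THEN continuous_on_subset] cP[THEN continuous_on_subset])
  have i2: "integrable lborel (\<lambda>x. indicator {-L'..L'} x *\<^sub>R ?g2 x)"
    by (rule borel_integrable_compact) (auto intro!: continuous_intros cu[THEN continuous_on_subset] cP[THEN continuous_on_subset])
  have e1: "(\<lambda>x. indicator {-L'..L'} x *\<^sub>R ?g1 x) = ?g1"
  proof
    fix x show "indicator {-L'..L'} x *\<^sub>R ?g1 x = ?g1 x"
    proof (cases "x \<in> {-L'..L'}")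
      case False then have "\<bar>x\<bar> > R" unfolding L'_def by auto
      then show ?thesis using R[of x j] by simp
    qed simp
  qed
  have e2: "(\<lambda>x. indicator {-L'..L'} x *\<^sub>R ?g2 x) = ?g2"
  proof
    fix x show "indicator {-L'..L'} x *\<^sub>R ?g2 x = ?g2 x"
    proof (cases "x \<in> {-L'..L'}")
      case False then have "\<bar>x\<bar> > L" unfolding L'_def by auto
      then show ?thesis using su[of x] by simp
    qed simp
  qed
  have "integral\<^sup>L lborel (\<lambda>x. indicator {-L'..L'} x *\<^sub>R (?g1 x + ?g2 x))
      = integral\<^sup>L lborel (\<lambda>x. indicator {-L'..L'} x *\<^sub>R ?g1 x) + integral\<^sup>L lborel (\<lambda>x. indicator {-L'..L'} x *\<^sub>R ?g2 x)"
    using i1 i2 by (simp add: distrib_left)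
  then have "(LBINT x. ?g1 x) + (LBINT x. ?g2 x) = 0" using FTC G0 e1 e2 by simp
  then show ?thesis by simp
qed

lemma sobolev_of_smooth:
  fixes Fd :: "nat \<Rightarrow> real \<Rightarrow> real"
  assumes der: "\<And>i x. i < m \<Longrightarrow> (Fd i has_real_derivative Fd (Suc i) x) (at x)"
    and cont: "\<And>i. i \<le> m \<Longrightarrow> continuous_on UNIV (Fd i)"
    and supp: "\<And>i x. i \<le> m \<Longrightarrow> \<bar>x\<bar> > L \<Longrightarrow> Fd i x = 0"
  shows "sobolev m (\<lambda>x. complex_of_real (Fd 0 x)) (\<lambda>i x. complex_of_real (Fd i x))"
  unfolding sobolev_def
proof (intro conjI allI impI)
  show "(\<lambda>x. complex_of_real (Fd 0 x)) = (\<lambda>x. complex_of_real (Fd 0 x))" ..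
  show "L2 (\<lambda>x. complex_of_real (Fd k x))" if "k \<le> m" for k
    by (rule cs_L2[OF cont[OF that] supp[OF that]])
  fix Phi k assume Phi: "test_function Phi" and k: "k \<le> m"
  have claim: "(LBINT x. Fd 0 x * Phi k x) = (-1) ^ i * (LBINT x. Fd i x * Phi (k - i) x)" if "i \<le> k" for i
    using that
  proof (induction i)
    case 0 then show ?case by simp
  next
    case (Suc i)
    have ki: "k - i = Suc (k - Suc i)" using Suc.prems by simp
    have "(LBINT x. Fd i x * Phi (k - i) x) = - (LBINT x. Fd (Suc i) x * Phi (k - Suc i) x)"
      unfolding ki
      by (rule ibp[OF der cont supp Phi]) (use Suc.prems k in auto)
    then show ?case using Suc by simp
  qed
  have "(LINT x|lborel. complex_of_real (Fd 0 x) * complex_of_real (Phi k x))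
      = complex_of_real (LBINT x. Fd 0 x * Phi k x)"
    by (simp flip: of_real_mult)
  also have "\<dots> = complex_of_real ((-1) ^ k * (LBINT x. Fd k x * Phi 0 x))"
    using claim[of k] by simp
  also have "\<dots> = (-1) ^ k * complex_of_real (LBINT x. Fd k x * Phi 0 x)"
    by (simp only: of_real_mult of_real_power of_real_minus of_real_1)
  also have "\<dots> = (-1) ^ k * (LINT x|lborel. complex_of_real (Fd k x) * complex_of_real (Phi 0 x))"
    by (simp flip: of_real_mult)
  finally show "(LINT x|lborel. complex_of_real (Fd 0 x) * complex_of_real (Phi k x)) =
       (- 1) ^ k * (LINT x|lborel. complex_of_real (Fd k x) * complex_of_real (Phi 0 x))" .
qed


lemma interval_zero_AE:
  assumes g: "L2 g"
    and z: "\<And>a b. a < b \<Longrightarrow> (LINT x|lborel. complex_of_real (indicator {a<..b} x) * g x) = 0"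
  shows "AE x in lborel. g x = 0"
proof -
  have si: "set_integrable lborel {a..b} g" for a b
  proof -
    have "integrable lborel (\<lambda>x. complex_of_real (indicator {a..b} x) * g x)"
      by (rule L2_prod_int[OF L2_indicator_Icc g])
    then show ?thesis unfolding set_integrable_def by (simp add: scaleR_conv_of_real)
  qed
  have ion: "g integrable_on cbox a b" for a b
    using set_borel_integral_eq_integral(1)[OF si[of a b]] by simp
  have iz: "integral {a..b} g = 0" if ab: "a < b" for a b
  proof -
    have "integral {a..b} g = (LINT x:{a..b}|lborel. g x)"
      by (rule set_borel_integral_eq_integral(2)[OF si, symmetric])
    also have "\<dots> = (LINT x|lborel. complex_of_real (indicator {a..b} x) * g x)"
      unfolding set_lebesgue_integral_def by (simp add: scaleR_conv_of_real)
    also have "\<dots> = (LINT x|lborel. complex_of_real (indicator {a<..b} x) * g x)"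
    proof (rule integral_cong_AE)
      show "(\<lambda>x. complex_of_real (indicator {a..b} x) * g x) \<in> borel_measurable lborel"
        using L2_meas[OF g] by simp
      show "(\<lambda>x. complex_of_real (indicator {a<..b} x) * g x) \<in> borel_measurable lborel"
        using L2_meas[OF g] by simp
      show "AE x in lborel. complex_of_real (indicator {a..b} x) * g x = complex_of_real (indicator {a<..b} x) * g x"
        using AE_lborel_singleton[of a] by eventually_elim (auto simp: indicator_def)
    qed
    also have "\<dots> = 0" by (rule z[OF ab])
    finally show ?thesis .
  qed
  obtain N where N: "negligible N"
    and Nd: "\<And>x e. \<lbrakk>x \<notin> N; 0 < e\<rbrakk> \<Longrightarrow> \<exists>d>0. \<forall>h. 0 < h \<and> h < d \<longrightarrow>
               norm (integral (cbox x (x + h *\<^sub>R One)) g /\<^sub>R h ^ DIM(real) - g x) < e"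
    using integrable_ccontinuous_explicit[of g] ion by blast
  have gz: "g x = 0" if x: "x \<notin> N" for x
  proof (rule ccontr)
    assume "g x \<noteq> 0"
    then have e: "0 < norm (g x)" by simp
    obtain d where d: "d > 0" and dd: "\<And>h. 0 < h \<and> h < d \<Longrightarrow>
        norm (integral (cbox x (x + h *\<^sub>R One)) g /\<^sub>R h ^ DIM(real) - g x) < norm (g x)"
      using Nd[OF x e] by blast
    have "norm (integral (cbox x (x + (d/2) *\<^sub>R One)) g /\<^sub>R (d/2) ^ DIM(real) - g x) < norm (g x)"
      using dd[of "d/2"] d by simp
    moreover have "integral (cbox x (x + (d/2) *\<^sub>R One)) g = 0"
      using iz[of x "x + d/2"] d by simp
    ultimately show False by simp
  qed
  have "N \<in> null_sets lebesgue" using N by (simp add: negligible_iff_null_sets)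
  then have "AE x in lebesgue. x \<notin> N" by (rule AE_not_in)
  then have "AE x in lborel. x \<notin> N" by (simp add: AE_completion_iff)
  then show ?thesis by eventually_elim (use gz in auto)
qed

definition plat :: "nat \<Rightarrow> real \<Rightarrow> real \<Rightarrow> nat \<Rightarrow> nat \<Rightarrow> real \<Rightarrow> real" where
  "plat m a b n i x = (real (Suc n)) ^ i * (Sd m i (real (Suc n) * (x - a)) - Sd m i (real (Suc n) * (x - b)))"

lemma plat_support:
  assumes ab: "a < b" and x: "\<bar>x\<bar> > max \<bar>a\<bar> (\<bar>b\<bar> + 1)"
  shows "plat m a b n i x = 0"
proof -
  have k1: "real (Suc n) \<ge> 1" by simp
  consider "x < a" | "x > b + 1" using x ab by (cases "x \<ge> 0") auto
  then show ?thesis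
  proof cases
    case 1
    have "real (Suc n) * (x - a) \<le> 0" "real (Suc n) * (x - b) \<le> 0"
      using 1 ab by (simp_all add: mult_nonneg_nonpos)
    then show ?thesis unfolding plat_def by (simp add: Sd_left)
  next
    case 2
    have "x - a \<le> real (Suc n) * (x - a)"
      using mult_right_mono[of 1 "real (Suc n)" "x - a"] 2 ab by simp
    then have "1 \<le> real (Suc n) * (x - a)" using 2 ab by linarith
    moreover have "x - b \<le> real (Suc n) * (x - b)"
      using mult_right_mono[of 1 "real (Suc n)" "x - b"] 2 ab by simp
    then have "1 \<le> real (Suc n) * (x - b)" using 2 ab by linarith
    ultimately show ?thesis unfolding plat_def by (simp add: Sd_right)
  qed
qed

lemma plat_sobolev:
  assumes ab: "a < b"
  shows "sobolev m (\<lambda>x. complex_of_real (plat m a b n 0 x)) (\<lambda>i x. complex_of_real (plat m a b n i x))"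
proof (rule sobolev_of_smooth)
  fix i x assume i: "i < m"
  let ?k = "real (Suc n)"
  have d1: "((\<lambda>x. Sd m i (?k * (x - a))) has_real_derivative Sd m (Suc i) (?k * (x - a)) * ?k) (at x)"
    by (rule DERIV_chain2[OF Sd_deriv]) (use i in \<open>auto intro!: derivative_eq_intros\<close>)
  have d2: "((\<lambda>x. Sd m i (?k * (x - b))) has_real_derivative Sd m (Suc i) (?k * (x - b)) * ?k) (at x)"
    by (rule DERIV_chain2[OF Sd_deriv]) (use i in \<open>auto intro!: derivative_eq_intros\<close>)
  have "((\<lambda>x. ?k ^ i * (Sd m i (?k * (x - a)) - Sd m i (?k * (x - b)))) has_real_derivative
        ?k ^ i * (Sd m (Suc i) (?k * (x - a)) * ?k - Sd m (Suc i) (?k * (x - b)) * ?k)) (at x)"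
    by (intro DERIV_cmult DERIV_diff d1 d2)
  then show "(plat m a b n i has_real_derivative plat m a b n (Suc i) x) (at x)"
    unfolding plat_def by (simp add: algebra_simps)
next
  fix i assume "i \<le> m"
  show "continuous_on UNIV (plat m a b n i)"
    unfolding plat_def
    by (intro continuous_intros continuous_on_compose2[OF Sd_cont]) auto
next
  fix i x assume "i \<le> m" "\<bar>x\<bar> > max \<bar>a\<bar> (\<bar>b\<bar> + 1)"
  then show "plat m a b n i x = 0" using plat_support[OF ab] by blast
qed

lemma plat_lim:
  assumes ab: "a < b"
  shows "(\<lambda>n. plat m a b n 0 x) \<longlonglongrightarrow> (poly (Rb m) 1 - poly (Rb m) 0) * indicator {a<..b} x"
proof -
  have S0: "Sd m 0 t = poly (Rb m) (clp t)" for t unfolding Sd_def by simp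
  have L: "\<And>t. t \<le> 0 \<Longrightarrow> Sd m 0 t = poly (Rb m) 0" and R: "\<And>t. t \<ge> 1 \<Longrightarrow> Sd m 0 t = poly (Rb m) 1"
    using Sd_left[of _ m 0] Sd_right[of _ m 0] by simp_all
  have ev: "eventually (\<lambda>n. real (Suc n) * y \<ge> 1) sequentially" if "y > 0" for y
  proof -
    obtain N :: nat where N: "real N > 1 / y" using reals_Archimedean2 by blast
    show ?thesis
    proof (rule eventually_sequentiallyI[of N])
      fix n assume "N \<le> n"
      then have "real (Suc n) > 1 / y" using N by linarith
      then show "real (Suc n) * y \<ge> 1" using that by (simp add: field_simps)
    qed
  qed
  consider "x \<le> a" | "a < x \<and> x \<le> b" | "x > b" by linarith
  then show ?thesis
  proof cases
    case 1
    have "plat m a b n 0 x = 0" for n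
    proof -
      have "real (Suc n) * (x - a) \<le> 0" "real (Suc n) * (x - b) \<le> 0"
        using 1 ab by (simp_all add: mult_nonneg_nonpos)
      then show ?thesis unfolding plat_def using L by simp
    qed
    then show ?thesis using 1 by simp
  next
    case 2
    have e1: "eventually (\<lambda>n. real (Suc n) * (x - a) \<ge> 1) sequentially" using ev[of "x - a"] 2 by simp
    have "eventually (\<lambda>n. plat m a b n 0 x = poly (Rb m) 1 - poly (Rb m) 0) sequentially"
      using e1
    proof (rule eventually_mono)
      fix n assume "1 \<le> real (Suc n) * (x - a)"
      moreover have "real (Suc n) * (x - b) \<le> 0" using 2 by (simp add: mult_nonneg_nonpos)
      ultimately show "plat m a b n 0 x = poly (Rb m) 1 - poly (Rb m) 0"
        unfolding plat_def using L R by simp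
    qed
    then show ?thesis using 2 by (simp add: tendsto_eventually)
  next
    case 3
    have e1: "eventually (\<lambda>n. real (Suc n) * (x - a) \<ge> 1 \<and> real (Suc n) * (x - b) \<ge> 1) sequentially"
      using eventually_conj[OF ev[of "x - a"] ev[of "x - b"]] 3 ab by simp
    have "eventually (\<lambda>n. plat m a b n 0 x = 0) sequentially"
      using e1
    proof (rule eventually_mono)
      fix n assume "1 \<le> real (Suc n) * (x - a) \<and> 1 \<le> real (Suc n) * (x - b)"
      then show "plat m a b n 0 x = 0" unfolding plat_def using R by simp
    qed
    then show ?thesis using 3 by (simp add: tendsto_eventually)
  qed
qed

lemma plat_bound:
  obtains B where "\<And>n x. \<bar>plat m a b n 0 x\<bar> \<le> B"
proof -
  have "compact (poly (Rb m) ` {0..1})"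
    by (rule compact_continuous_image) (auto intro: continuous_intros)
  then obtain B where B: "\<And>t. t \<in> {0..1} \<Longrightarrow> \<bar>poly (Rb m) t\<bar> \<le> B"
    using compact_imp_bounded bounded_iff by (metis image_eqI real_norm_def)
  have cl: "clp t \<in> {0..1}" for t unfolding clp_def by auto
  have "\<bar>plat m a b n 0 x\<bar> \<le> 2 * B" for n x
  proof -
    have "\<bar>plat m a b n 0 x\<bar> \<le> \<bar>poly (Rb m) (clp (real (Suc n) * (x - a)))\<bar> + \<bar>poly (Rb m) (clp (real (Suc n) * (x - b)))\<bar>"
      unfolding plat_def Sd_def by simp
    moreover have "\<bar>poly (Rb m) (clp (real (Suc n) * (x - a)))\<bar> \<le> B" by (rule B[OF cl])
    moreover have "\<bar>poly (Rb m) (clp (real (Suc n) * (x - b)))\<bar> \<le> B" by (rule B[OF cl])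
    ultimately show ?thesis by linarith
  qed
  then show ?thesis using that by blast
qed

lemma density:
  assumes h: "L2 h" and orth: "\<And>f Df. sobolev m f Df \<Longrightarrow> L2_inner f h = 0"
  shows "AE x in lborel. h x = 0"
proof -
  define g where "g x = cnj (h x)" for x
  have g: "L2 g" unfolding g_def by (rule L2_cnj[OF h])
  have z: "(LINT x|lborel. complex_of_real (indicator {a<..b} x) * g x) = 0" if ab: "a < b" for a b
  proof -
    define c where "c = poly (Rb m) 1 - poly (Rb m) 0"
    have c0: "c \<noteq> 0" unfolding c_def using Rb_increase[of m] by simp
    define L where "L = max \<bar>a\<bar> (\<bar>b\<bar> + 1)"
    obtain B where B: "\<And>n x. \<bar>plat m a b n 0 x\<bar> \<le> B" using plat_bound by blast
    define w where "w x = B * cmod (complex_of_real (indicator {-L..L} x) * g x)" for x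
    have lim: "(\<lambda>n. LINT x|lborel. complex_of_real (plat m a b n 0 x) * g x) \<longlonglongrightarrow>
               (LINT x|lborel. complex_of_real (c * indicator {a<..b} x) * g x)"
    proof -
      have h1: "(\<lambda>x. complex_of_real (c * indicator {a<..b} x) * g x) \<in> borel_measurable lborel"
        using L2_meas[OF g] by simp
      have h2: "(\<lambda>x. complex_of_real (plat m a b n 0 x) * g x) \<in> borel_measurable lborel" for n
        using L2_meas[OF g] L2_meas[OF sobolev_L2[OF plat_sobolev[OF ab]]] by simp
      have h3: "integrable lborel w"
        unfolding w_def by (intro integrable_mult_right integrable_norm L2_prod_int[OF L2_indicator_Icc g])
      have h4: "AE x in lborel. (\<lambda>n. complex_of_real (plat m a b n 0 x) * g x) \<longlonglongrightarrow> complex_of_real (c * indicator {a<..b} x) * g x"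
        by (intro AE_I2 tendsto_intros plat_lim[OF ab, of m, folded c_def])
      have h5: "AE x in lborel. norm (complex_of_real (plat m a b n 0 x) * g x) \<le> w x" for n
      proof (rule AE_I2)
        fix x
        show "norm (complex_of_real (plat m a b n 0 x) * g x) \<le> w x"
        proof (cases "x \<in> {-L..L}")
          case True
          then show ?thesis unfolding w_def using B[of n x]
            by (simp add: norm_mult mult_right_mono)
        next
          case False
          then have "\<bar>x\<bar> > L" by auto
          then have "plat m a b n 0 x = 0" using plat_support[OF ab] unfolding L_def by blast
          then show ?thesis unfolding w_def using False by simp
        qed
      qed
      show ?thesis
        using integral_dominated_convergence[of "\<lambda>x. complex_of_real (c * indicator {a<..b} x) * g x" lborel
            "\<lambda>n x. complex_of_real (plat m a b n 0 x) * g x" w, OF h1 h2 h3 h4 h5] by simp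
    qed
    have "(\<lambda>n. LINT x|lborel. complex_of_real (plat m a b n 0 x) * g x) = (\<lambda>n. 0)"
    proof
      fix n
      show "(LINT x|lborel. complex_of_real (plat m a b n 0 x) * g x) = 0"
        using orth[OF plat_sobolev[OF ab, of m n]] unfolding L2_inner_def g_def .
    qed
    with lim have "(LINT x|lborel. complex_of_real (c * indicator {a<..b} x) * g x) = 0"
      using LIMSEQ_unique tendsto_const by metis
    then have "complex_of_real c * (LINT x|lborel. complex_of_real (indicator {a<..b} x) * g x) = 0"
      by (simp add: mult.assoc)
    then show ?thesis using c0 by simp
  qed
  have "AE x in lborel. g x = 0" by (rule interval_zero_AE[OF g z])
  then show ?thesis unfolding g_def by simp
qed


lemma L2_parallelogram:
  assumes "L2 p" "L2 q"
  shows "(L2_norm (\<lambda>x. p x - q x))\<^sup>2 + (L2_norm (\<lambda>x. p x + q x))\<^sup>2 = 2 * (L2_norm p)\<^sup>2 + 2 * (L2_norm q)\<^sup>2"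
  using L2_norm_sq_expand[OF assms, of 1] L2_norm_sq_expand[OF assms, of "-1"] by simp

context opsetting
begin

definition Dm :: "(nat \<Rightarrow> real \<Rightarrow> complex) \<Rightarrow> bool" where
  "Dm Df \<longleftrightarrow> sobolev m (Df 0) Df"

definition Bop :: "real \<Rightarrow> complex \<Rightarrow> (nat \<Rightarrow> real \<Rightarrow> complex) \<Rightarrow> real \<Rightarrow> complex" where
  "Bop t z Df = (\<lambda>x. opA a m t Df x - z * Df 0 x)"

lemma Dm_iff: "sobolev m f Df \<longleftrightarrow> Dm Df \<and> Df 0 = f"
  unfolding Dm_def using sobolev_D0 by blast

lemma Dm_L2: "Dm Df \<Longrightarrow> L2 (Df 0)"
  unfolding Dm_def by (rule sobolev_L2)

lemma Dm_lincomb: "Dm Df \<Longrightarrow> Dm Dg \<Longrightarrow> Dm (\<lambda>k x. Df k x + c * Dg k x)"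
  unfolding Dm_def using sobolev_lincomb by blast

lemma Dm_zero: "Dm (\<lambda>k x. 0)"
  unfolding Dm_def using sobolev_zero by simp

lemma Dm_scale: "Dm Df \<Longrightarrow> Dm (\<lambda>k x. c * Df k x)"
  using Dm_lincomb[OF Dm_zero, of Df c] by simp

lemma Dm_diff: "Dm Df \<Longrightarrow> Dm Dg \<Longrightarrow> Dm (\<lambda>k x. Df k x - Dg k x)"
  using Dm_lincomb[of Df Dg "-1"] by simp

lemma opA_L2': "Dm Df \<Longrightarrow> L2 (opA a m t Df)"
  unfolding Dm_def by (rule opA_L2)

lemma Bop_L2: "Dm Df \<Longrightarrow> L2 (Bop t z Df)"
  unfolding Bop_def by (intro L2_diff opA_L2' L2_cmult Dm_L2)

lemma Bop_lincomb: "Bop t z (\<lambda>k x. Df k x + c * Dg k x) = (\<lambda>x. Bop t z Df x + c * Bop t z Dg x)"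
  unfolding Bop_def by (simp add: opA_lincomb algebra_simps)

lemma Bop_diff: "Bop t z (\<lambda>k x. Df k x - Dg k x) = (\<lambda>x. Bop t z Df x - Bop t z Dg x)"
  unfolding Bop_def by (simp add: opA_diff algebra_simps)

lemma Bop_scale: "Bop t z (\<lambda>k x. c * Df k x) = (\<lambda>x. c * Bop t z Df x)"
  unfolding Bop_def by (simp add: opA_scale algebra_simps)

lemma sym: "Dm Df \<Longrightarrow> Dm Dg \<Longrightarrow> L2_inner (opA a m t Df) (Dg 0) = L2_inner (Df 0) (opA a m t Dg)"
  using selfadj[of t] unfolding self_adjoint_op_def Dm_def by blast

lemma adj:
  assumes "L2 g" "L2 h" "\<And>Df. Dm Df \<Longrightarrow> L2_inner (opA a m t Df) g = L2_inner (Df 0) h"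
  shows "\<exists>Dg. Dm Dg \<and> Dg 0 = g"
proof -
  have "\<forall>f Df. sobolev m f Df \<longrightarrow> L2_inner (opA a m t Df) g = L2_inner f h"
    using assms(3) unfolding Dm_iff by blast
  then obtain Dg where "sobolev m g Dg" using selfadj[of t] assms(1,2) unfolding self_adjoint_op_def by blast
  then show ?thesis unfolding Dm_iff by blast
qed

lemma dens:
  assumes "L2 h" "\<And>Df. Dm Df \<Longrightarrow> L2_inner (Df 0) h = 0"
  shows "AE x in lborel. h x = 0"
  by (rule density[where m=m, OF assms(1)]) (use assms(2) in \<open>auto simp: Dm_iff\<close>)

lemma quad_real: "Dm Df \<Longrightarrow> Im (L2_inner (opA a m t Df) (Df 0)) = 0"
proof -
  assume f: "Dm Df"
  let ?w = "L2_inner (opA a m t Df) (Df 0)"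
  have "?w = cnj ?w"
    using sym[OF f f, of t] L2_inner_cnj[of "Df 0" "opA a m t Df"] by simp
  then have "Im ?w = Im (cnj ?w)" by (rule arg_cong)
  then show "Im ?w = 0" by simp
qed

lemma bound_nonreal:
  assumes f: "Dm Df"
  shows "\<bar>Im z\<bar> * L2_norm (Df 0) \<le> L2_norm (Bop t z Df)"
proof -
  let ?u = "\<lambda>x. opA a m t Df x - complex_of_real (Re z) * Df 0 x"
  let ?s = "- (\<i> * complex_of_real (Im z))"
  have Lu: "L2 ?u" using f by (intro L2_diff opA_L2' L2_cmult Dm_L2)
  have Lf: "L2 (Df 0)" using f by (rule Dm_L2)
  have eq: "Bop t z Df = (\<lambda>x. ?u x + ?s * Df 0 x)"
    unfolding Bop_def by (rule ext) (simp add: complex_eq_iff algebra_simps)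
  have inner_real: "Im (L2_inner ?u (Df 0)) = 0"
  proof -
    have "L2_inner ?u (Df 0) = L2_inner (opA a m t Df) (Df 0) - complex_of_real (Re z) * L2_inner (Df 0) (Df 0)"
      using Lf opA_L2'[OF f] by (simp add: L2_inner_diff_left L2_cmult L2_inner_scale_left)
    then show ?thesis using quad_real[OF f, of t] L2_inner_self[OF Lf] by simp
  qed
  have "(L2_norm (Bop t z Df))\<^sup>2 = (L2_norm ?u)\<^sup>2 + 2 * Re (cnj ?s * L2_inner ?u (Df 0)) + (cmod ?s)\<^sup>2 * (L2_norm (Df 0))\<^sup>2"
    unfolding eq by (rule L2_norm_sq_expand[OF Lu Lf])
  also have "Re (cnj ?s * L2_inner ?u (Df 0)) = 0"
    using inner_real by simp
  also have "(cmod ?s)\<^sup>2 = (Im z)\<^sup>2" by (simp add: norm_mult)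
  finally have "(L2_norm (Bop t z Df))\<^sup>2 \<ge> (\<bar>Im z\<bar> * L2_norm (Df 0))\<^sup>2"
    by (simp add: power_mult_distrib)
  then show ?thesis by (rule power2_le_imp_le[OF _ L2_norm_nonneg])
qed

end


lemma cauchy_from_sq:
  fixes X :: "nat \<Rightarrow> nat \<Rightarrow> real"
  assumes X0: "\<And>j k. 0 \<le> X j k" and b: "\<And>j k. (X j k)\<^sup>2 \<le> 2 / real (Suc j) + 2 / real (Suc k)"
    and e: "e > 0"
  shows "\<exists>N. \<forall>j\<ge>N. \<forall>k\<ge>N. X j k < e"
proof -
  obtain N :: nat where N: "real N > 4 / e\<^sup>2" using reals_Archimedean2 by blast
  have "X j k < e" if j: "j \<ge> N" and k: "k \<ge> N" for j k
  proof -
    have "real (Suc j) > 4 / e\<^sup>2" "real (Suc k) > 4 / e\<^sup>2" using N j k by linarith+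
    then have "2 / real (Suc j) < e\<^sup>2 / 2" "2 / real (Suc k) < e\<^sup>2 / 2"
      using e by (simp_all add: field_simps)
    then have "(X j k)\<^sup>2 < e\<^sup>2" using b[of j k] by linarith
    then show ?thesis using e X0[of j k] by (meson less_le power_less_imp_less_base)
  qed
  then show ?thesis by blast
qed

context opsetting
begin

lemma surj_B:
  assumes c: "c > 0"
    and b1: "\<And>Df. Dm Df \<Longrightarrow> c * L2_norm (Df 0) \<le> L2_norm (Bop t z Df)"
    and b2: "\<And>Df. Dm Df \<Longrightarrow> c * L2_norm (Df 0) \<le> L2_norm (Bop t (cnj z) Df)"
    and y: "L2 y"
  shows "\<exists>DF. Dm DF \<and> (AE x in lborel. Bop t z DF x = y x)"
proof -
  let ?r = "\<lambda>Df. L2_norm (\<lambda>x. y x - Bop t z Df x)"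
  define S where "S = {?r Df | Df. Dm Df}"
  define d where "d = Inf S"
  have Sne: "S \<noteq> {}" unfolding S_def using Dm_zero by blast
  have Sbdd: "bdd_below S" unfolding S_def bdd_below_def using L2_norm_nonneg by blast
  have d_le: "d \<le> ?r Df" if "Dm Df" for Df
    unfolding d_def by (rule cInf_lower[OF _ Sbdd]) (use that S_def in blast)
  have d0: "0 \<le> d" unfolding d_def by (rule cInf_greatest[OF Sne]) (auto simp: S_def L2_norm_nonneg)
  have Ly: "L2 (\<lambda>x. y x - Bop t z Df x)" if "Dm Df" for Df by (rule L2_diff[OF y Bop_L2[OF that]])
  have ex: "\<exists>Df. Dm Df \<and> (?r Df)\<^sup>2 < d\<^sup>2 + 1 / real (Suc n)" for n
  proof -
    have "d < sqrt (d\<^sup>2 + 1 / real (Suc n))"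
      using d0 by (metis less_add_same_cancel1 of_nat_0_less_iff real_sqrt_abs real_sqrt_less_iff abs_of_nonneg
          zero_less_Suc divide_pos_pos zero_less_one)
    then obtain v where "v \<in> S" "v < sqrt (d\<^sup>2 + 1 / real (Suc n))"
      using cInf_lessD[OF Sne] unfolding d_def by blast
    then obtain Df where Df: "Dm Df" "?r Df < sqrt (d\<^sup>2 + 1 / real (Suc n))" unfolding S_def by blast
    then have "(?r Df)\<^sup>2 < d\<^sup>2 + 1 / real (Suc n)"
      using L2_norm_nonneg by (metis real_sqrt_less_iff real_sqrt_power abs_of_nonneg power2_eq_square real_sqrt_mult_self real_sqrt_pow2 zero_le_power2 real_less_rsqrt)
    then show ?thesis using Df by blast
  qed
  then obtain Dn where Dn: "\<And>n. Dm (Dn n)" and Dnr: "\<And>n. (?r (Dn n))\<^sup>2 < d\<^sup>2 + 1 / real (Suc n)"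
    by metis

  define f where "f n = Dn n 0" for n
  define bn where "bn n = Bop t z (Dn n)" for n
  have Lf: "L2 (f n)" for n unfolding f_def by (rule Dm_L2[OF Dn])
  have Lb: "L2 (bn n)" for n unfolding bn_def by (rule Bop_L2[OF Dn])
  have Lyb: "L2 (\<lambda>x. y x - bn n x)" for n unfolding bn_def by (rule Ly[OF Dn])
  have par: "(L2_norm (\<lambda>x. bn j x - bn k x))\<^sup>2 \<le> 2 / real (Suc j) + 2 / real (Suc k)" for j k
  proof -
    define mid where "mid = (\<lambda>i x. (1/2) * (Dn j i x + 1 * Dn k i x))"
    have Dmid: "Dm mid" unfolding mid_def by (rule Dm_scale[OF Dm_lincomb[OF Dn Dn]])
    have Bmid: "Bop t z mid = (\<lambda>x. (1/2) * (bn j x + 1 * bn k x))"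
      unfolding mid_def bn_def Bop_scale Bop_lincomb ..
    have pq: "(L2_norm (\<lambda>x. (y x - bn j x) - (y x - bn k x)))\<^sup>2 + (L2_norm (\<lambda>x. (y x - bn j x) + (y x - bn k x)))\<^sup>2
        = 2 * (L2_norm (\<lambda>x. y x - bn j x))\<^sup>2 + 2 * (L2_norm (\<lambda>x. y x - bn k x))\<^sup>2"
      by (rule L2_parallelogram[OF Lyb Lyb])
    have e1: "(\<lambda>x. (y x - bn j x) - (y x - bn k x)) = (\<lambda>x. - (bn j x - bn k x))" by (auto simp: fun_eq_iff)
    have e2: "(\<lambda>x. (y x - bn j x) + (y x - bn k x)) = (\<lambda>x. 2 * (y x - Bop t z mid x))"
      unfolding Bmid by (auto simp: fun_eq_iff algebra_simps)
    have n2: "L2_norm (\<lambda>x. (y x - bn j x) + (y x - bn k x)) = 2 * ?r mid"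
      unfolding e2 L2_norm_scale by simp
    have "2 * d \<le> 2 * ?r mid" using d_le[OF Dmid] by simp
    then have "(2 * d)\<^sup>2 \<le> (L2_norm (\<lambda>x. (y x - bn j x) + (y x - bn k x)))\<^sup>2"
      unfolding n2 using d0 by (intro power_mono) auto
    moreover have "(L2_norm (\<lambda>x. y x - bn j x))\<^sup>2 < d\<^sup>2 + 1 / real (Suc j)" using Dnr[of j] unfolding bn_def .
    moreover have "(L2_norm (\<lambda>x. y x - bn k x))\<^sup>2 < d\<^sup>2 + 1 / real (Suc k)" using Dnr[of k] unfolding bn_def .
    moreover have "L2_norm (\<lambda>x. (y x - bn j x) - (y x - bn k x)) = L2_norm (\<lambda>x. bn j x - bn k x)"
      unfolding e1 L2_norm_uminus ..
    ultimately show ?thesis using pq by (simp add: power_mult_distrib)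
  qed
  have cb: "\<exists>N. \<forall>j\<ge>N. \<forall>k\<ge>N. L2_norm (\<lambda>x. bn j x - bn k x) < e" if "e > 0" for e
    by (rule cauchy_from_sq[OF L2_norm_nonneg par that])
  have cf: "\<exists>N. \<forall>j\<ge>N. \<forall>k\<ge>N. L2_norm (\<lambda>x. f j x - f k x) < e" if e: "e > 0" for e
  proof -
    obtain N where N: "\<And>j k. j \<ge> N \<Longrightarrow> k \<ge> N \<Longrightarrow> L2_norm (\<lambda>x. bn j x - bn k x) < e * c"
      using cb[of "e * c"] e c by auto
    have "L2_norm (\<lambda>x. f j x - f k x) < e" if "j \<ge> N" "k \<ge> N" for j k
    proof -
      have "c * L2_norm (\<lambda>x. f j x - f k x) \<le> L2_norm (\<lambda>x. bn j x - bn k x)"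
        using b1[OF Dm_diff[OF Dn Dn, of j k]] unfolding f_def bn_def Bop_diff by simp
      also have "\<dots> < e * c" using N that by blast
      finally show ?thesis using c by (simp add: mult.commute)
    qed
    then show ?thesis by blast
  qed
  obtain F where LF: "L2 F" and fF: "(\<lambda>n. L2_norm (\<lambda>x. f n x - F x)) \<longlonglongrightarrow> 0"
    using L2_complete[OF Lf cf] by blast
  obtain W where LW: "L2 W" and bW: "(\<lambda>n. L2_norm (\<lambda>x. bn n x - W x)) \<longlonglongrightarrow> 0"
    using L2_complete[OF Lb cb] by blast
  have cl: "L2_inner (opA a m t Dg) F = L2_inner (Dg 0) (\<lambda>x. W x + z * F x)" if Dg: "Dm Dg" for Dg
  proof -
    have Lg: "L2 (Dg 0)" by (rule Dm_L2[OF Dg])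
    have t1: "(\<lambda>n. L2_inner (opA a m t Dg) (f n)) \<longlonglongrightarrow> L2_inner (opA a m t Dg) F"
      by (rule L2_inner_tendsto_right[OF Lf LF opA_L2'[OF Dg] fF])
    have eqn: "L2_inner (opA a m t Dg) (f n) = L2_inner (Dg 0) (bn n) + cnj z * L2_inner (Dg 0) (f n)" for n
    proof -
      have "L2_inner (opA a m t Dg) (f n) = L2_inner (Dg 0) (opA a m t (Dn n))"
        unfolding f_def by (rule sym[OF Dg Dn])
      also have "opA a m t (Dn n) = (\<lambda>x. bn n x + z * f n x)"
        unfolding bn_def Bop_def f_def by auto
      also have "L2_inner (Dg 0) (\<lambda>x. bn n x + z * f n x) = L2_inner (Dg 0) (bn n) + cnj z * L2_inner (Dg 0) (f n)"
        using Lb Lf Lg by (simp add: L2_inner_add_right L2_cmult L2_inner_scale_right)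
      finally show ?thesis .
    qed
    have t2: "(\<lambda>n. L2_inner (Dg 0) (bn n) + cnj z * L2_inner (Dg 0) (f n)) \<longlonglongrightarrow>
               L2_inner (Dg 0) W + cnj z * L2_inner (Dg 0) F"
      by (intro tendsto_add tendsto_mult tendsto_const L2_inner_tendsto_right[OF Lb LW Lg bW]
          L2_inner_tendsto_right[OF Lf LF Lg fF])
    have "L2_inner (opA a m t Dg) F = L2_inner (Dg 0) W + cnj z * L2_inner (Dg 0) F"
      using LIMSEQ_unique[OF t1] t2 unfolding eqn by blast
    also have "\<dots> = L2_inner (Dg 0) (\<lambda>x. W x + z * F x)"
      using LW LF Lg by (simp add: L2_inner_add_right L2_cmult L2_inner_scale_right)
    finally show ?thesis .
  qed
  obtain DF where DF: "Dm DF" and DF0: "DF 0 = F"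
    using adj[OF LF L2_add[OF LW L2_cmult[OF LF]] cl] by blast
  have BDF: "AE x in lborel. Bop t z DF x = W x"
  proof -
    have LBD: "L2 (Bop t z DF)" by (rule Bop_L2[OF DF])
    have "AE x in lborel. Bop t z DF x - W x = 0"
    proof (rule dens[OF L2_diff[OF LBD LW]])
      fix Dg assume Dg: "Dm Dg"
      have Lg: "L2 (Dg 0)" by (rule Dm_L2[OF Dg])
      have "Bop t z DF = (\<lambda>x. opA a m t DF x - z * F x)" unfolding Bop_def DF0 ..
      then have "(\<lambda>x. Bop t z DF x - W x) = (\<lambda>x. opA a m t DF x - (W x + z * F x))"
        by (auto simp: fun_eq_iff)
      then have "L2_inner (Dg 0) (\<lambda>x. Bop t z DF x - W x) = L2_inner (Dg 0) (opA a m t DF) - L2_inner (Dg 0) (\<lambda>x. W x + z * F x)"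
        using Lg opA_L2'[OF DF] L2_add[OF LW L2_cmult[OF LF]] by (simp add: L2_inner_diff_right)
      also have "L2_inner (Dg 0) (opA a m t DF) = L2_inner (opA a m t Dg) F"
        using sym[OF Dg DF] DF0 by simp
      finally show "L2_inner (Dg 0) (\<lambda>x. Bop t z DF x - W x) = 0" using cl[OF Dg] by simp
    qed
    then show ?thesis by eventually_elim simp
  qed
  define e where "e x = y x - Bop t z DF x" for x
  have Le: "L2 e" unfolding e_def by (rule Ly[OF DF])
  have ne: "L2_norm e = d"
  proof -
    have "L2_norm e = L2_norm (\<lambda>x. y x - W x)"
      unfolding e_def by (rule L2_AE_norm_eq[OF Ly[OF DF] L2_diff[OF y LW]]) (use BDF in eventually_elim; simp)
    moreover have "(\<lambda>n. L2_norm (\<lambda>x. y x - bn n x)) \<longlonglongrightarrow> L2_norm (\<lambda>x. y x - W x)"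
    proof (rule L2_norm_tendsto[OF Lyb L2_diff[OF y LW]])
      have "(\<lambda>n. L2_norm (\<lambda>x. (y x - bn n x) - (y x - W x))) = (\<lambda>n. L2_norm (\<lambda>x. bn n x - W x))"
        using L2_norm_commute by (simp add: algebra_simps)
      then show "(\<lambda>n. L2_norm (\<lambda>x. (y x - bn n x) - (y x - W x))) \<longlonglongrightarrow> 0" using bW by simp
    qed
    moreover have "(\<lambda>n. L2_norm (\<lambda>x. y x - bn n x)) \<longlonglongrightarrow> d"
    proof (rule real_tendsto_sandwich[where f = "\<lambda>n. d" and h = "\<lambda>n. sqrt (d\<^sup>2 + 1 / real (Suc n))"])
      show "\<forall>\<^sub>F n in sequentially. d \<le> L2_norm (\<lambda>x. y x - bn n x)"
        unfolding bn_def using d_le[OF Dn] by simp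
      show "\<forall>\<^sub>F n in sequentially. L2_norm (\<lambda>x. y x - bn n x) \<le> sqrt (d\<^sup>2 + 1 / real (Suc n))"
      proof (rule always_eventually, rule allI)
        fix n
        have "(L2_norm (\<lambda>x. y x - bn n x))\<^sup>2 \<le> d\<^sup>2 + 1 / real (Suc n)"
          using Dnr[of n] unfolding bn_def by simp
        then show "L2_norm (\<lambda>x. y x - bn n x) \<le> sqrt (d\<^sup>2 + 1 / real (Suc n))"
          using L2_norm_nonneg real_le_rsqrt by blast
      qed
      show "(\<lambda>n. d) \<longlonglongrightarrow> d" by simp
      have "(\<lambda>n. sqrt (d\<^sup>2 + 1 / real (Suc n))) \<longlonglongrightarrow> sqrt (d\<^sup>2 + 0)"
        by (intro tendsto_intros LIMSEQ_inverse_real_of_nat[unfolded inverse_eq_divide])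
      then show "(\<lambda>n. sqrt (d\<^sup>2 + 1 / real (Suc n))) \<longlonglongrightarrow> d" using d0 by simp
    qed
    ultimately show ?thesis using LIMSEQ_unique by metis
  qed
  \<comment> \<open>variational orthogonality\<close>
  have orth: "L2_inner e (Bop t z Dg) = 0" if Dg: "Dm Dg" for Dg
  proof -
    define w where "w = L2_inner e (Bop t z Dg)"
    define q where "q = L2_norm (Bop t z Dg)"
    have LB: "L2 (Bop t z Dg)" by (rule Bop_L2[OF Dg])
    define \<tau> :: real where "\<tau> = 1 / (q\<^sup>2 + 1)"
    have qq: "0 < q\<^sup>2 + 1" using zero_le_power2[of q] by linarith
    then have qq': "q\<^sup>2 + 1 \<noteq> 0" by simp
    have tau: "0 < \<tau>" "\<tau> * q\<^sup>2 < 1" unfolding \<tau>_def using qq qq' by (simp_all add: field_simps)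
    define s where "s = complex_of_real \<tau> * w"
    have Dm2: "Dm (\<lambda>k x. DF k x + s * Dg k x)" by (rule Dm_lincomb[OF DF Dg])
    have "d \<le> ?r (\<lambda>k x. DF k x + s * Dg k x)" by (rule d_le[OF Dm2])
    also have "(\<lambda>x. y x - Bop t z (\<lambda>k x. DF k x + s * Dg k x) x) = (\<lambda>x. e x + (- s) * Bop t z Dg x)"
      unfolding Bop_lincomb e_def by (auto simp: fun_eq_iff)
    finally have "d \<le> L2_norm (\<lambda>x. e x + (- s) * Bop t z Dg x)" .
    then have "d\<^sup>2 \<le> (L2_norm (\<lambda>x. e x + (- s) * Bop t z Dg x))\<^sup>2" using d0 by (intro power_mono) auto
    also have "\<dots> = (L2_norm e)\<^sup>2 + 2 * Re (cnj (- s) * w) + (cmod (- s))\<^sup>2 * q\<^sup>2"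
      unfolding w_def q_def by (rule L2_norm_sq_expand[OF Le LB])
    also have "Re (cnj (- s) * w) = - \<tau> * (cmod w)\<^sup>2"
    proof -
      have "cnj (- s) * w = - complex_of_real \<tau> * (w * cnj w)" unfolding s_def by (simp add: algebra_simps)
      also have "\<dots> = complex_of_real (- \<tau> * (cmod w)\<^sup>2)"
        by (simp only: complex_norm_square[symmetric] of_real_mult of_real_minus)
      finally show ?thesis by simp
    qed
    also have "(cmod (- s))\<^sup>2 = \<tau>\<^sup>2 * (cmod w)\<^sup>2" unfolding s_def by (simp add: norm_mult power_mult_distrib)
    finally have "0 \<le> - 2 * \<tau> * (cmod w)\<^sup>2 + \<tau>\<^sup>2 * (cmod w)\<^sup>2 * q\<^sup>2" using ne by simp
    then have "0 \<le> \<tau> * ((cmod w)\<^sup>2 * (\<tau> * q\<^sup>2 - 2))" by (simp add: algebra_simps power2_eq_square)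
    then have "0 \<le> (cmod w)\<^sup>2 * (\<tau> * q\<^sup>2 - 2)" using tau(1) by (simp add: zero_le_mult_iff)
    moreover have "\<tau> * q\<^sup>2 - 2 < 0" using tau(2) by simp
    ultimately have "(cmod w)\<^sup>2 \<le> 0" by (simp add: zero_le_mult_iff)
    then show ?thesis unfolding w_def by simp
  qed
  have adjz: "L2_inner (opA a m t Dg) e = L2_inner (Dg 0) (\<lambda>x. cnj z * e x)" if Dg: "Dm Dg" for Dg
  proof -
    have Lg: "L2 (Dg 0)" by (rule Dm_L2[OF Dg])
    have "opA a m t Dg = (\<lambda>x. Bop t z Dg x + z * Dg 0 x)" unfolding Bop_def by auto
    then have "L2_inner (opA a m t Dg) e = L2_inner (Bop t z Dg) e + z * L2_inner (Dg 0) e"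
      using Bop_L2[OF Dg] Lg Le by (simp add: L2_inner_add_left L2_cmult L2_inner_scale_left)
    also have "L2_inner (Bop t z Dg) e = 0" using orth[OF Dg] L2_inner_cnj[of "Bop t z Dg" e] by simp
    finally show ?thesis by (simp add: L2_inner_scale_right)
  qed
  obtain De where De: "Dm De" and De0: "De 0 = e"
    using adj[OF Le L2_cmult[OF Le] adjz] by blast
  have "AE x in lborel. Bop t (cnj z) De x = 0"
  proof (rule dens[OF Bop_L2[OF De]])
    fix Dg assume Dg: "Dm Dg"
    have Lg: "L2 (Dg 0)" by (rule Dm_L2[OF Dg])
    have "L2_inner (Dg 0) (Bop t (cnj z) De) = L2_inner (Dg 0) (opA a m t De) - L2_inner (Dg 0) (\<lambda>x. cnj z * e x)"
      unfolding Bop_def De0 using Lg opA_L2'[OF De] L2_cmult[OF Le] by (simp add: L2_inner_diff_right)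
    also have "L2_inner (Dg 0) (opA a m t De) = L2_inner (opA a m t Dg) e"
      using sym[OF Dg De] De0 by simp
    finally show "L2_inner (Dg 0) (Bop t (cnj z) De) = 0" using adjz[OF Dg] by simp
  qed
  then have "L2_norm (Bop t (cnj z) De) = 0"
    using L2_norm_zero_iff[OF Bop_L2[OF De]] by simp
  then have "c * L2_norm e \<le> 0" using b2[OF De] De0 by simp
  then have "L2_norm e = 0" using c L2_norm_nonneg[of e] by (simp add: mult_le_0_iff)
  then have "AE x in lborel. e x = 0" using L2_norm_zero_iff[OF Le] by simp
  then have "AE x in lborel. Bop t z DF x = y x" unfolding e_def by eventually_elim simp
  with DF show ?thesis by blast
qed

end


context opsetting
begin

lemma opA_Bop: "Dm Df \<Longrightarrow> (\<lambda>x. opA a m t Df x - z * Df 0 x) = Bop t z Df"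
  unfolding Bop_def ..

lemma res_iff: "z \<in> resolvent_set_op a m t \<longleftrightarrow>
   (\<forall>g. L2 g \<longrightarrow> (\<exists>Df. Dm Df \<and> (AE x in lborel. Bop t z Df x = g x))) \<and>
   (\<exists>C. \<forall>Df. Dm Df \<longrightarrow> L2_norm (Df 0) \<le> C * L2_norm (Bop t z Df))"
  unfolding resolvent_set_op_def Bop_def Dm_iff by auto

lemma spec_iff: "z \<in> spectrum_op a m t \<longleftrightarrow> z \<notin> resolvent_set_op a m t"
  unfolding spectrum_op_def by simp

lemma in_res_intro:
  assumes c: "c > 0"
    and b1: "\<And>Df. Dm Df \<Longrightarrow> c * L2_norm (Df 0) \<le> L2_norm (Bop t z Df)"
    and b2: "\<And>Df. Dm Df \<Longrightarrow> c * L2_norm (Df 0) \<le> L2_norm (Bop t (cnj z) Df)"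
  shows "z \<in> resolvent_set_op a m t"
  unfolding res_iff
proof (intro conjI allI impI)
  fix g assume g: "L2 g"
  show "\<exists>Df. Dm Df \<and> (AE x in lborel. Bop t z Df x = g x)" using surj_B[OF c b1 b2 g] .
next
  show "\<exists>C. \<forall>Df. Dm Df \<longrightarrow> L2_norm (Df 0) \<le> C * L2_norm (Bop t z Df)"
  proof (intro exI allI impI)
    fix Df assume "Dm Df"
    then have "c * L2_norm (Df 0) \<le> L2_norm (Bop t z Df)" by (rule b1)
    then show "L2_norm (Df 0) \<le> (1 / c) * L2_norm (Bop t z Df)" using c by (simp add: field_simps)
  qed
qed

lemma nonreal_res:
  assumes "Im z \<noteq> 0"
  shows "z \<in> resolvent_set_op a m t"
  by (rule in_res_intro[of "\<bar>Im z\<bar>"]) (use assms bound_nonreal[of _ z t] bound_nonreal[of _ "cnj z" t] in auto)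

lemma approx_spec:
  assumes "\<And>e. e > 0 \<Longrightarrow> \<exists>Df. Dm Df \<and> L2_norm (Bop t z Df) < e * L2_norm (Df 0)"
  shows "z \<in> spectrum_op a m t"
proof (unfold spec_iff, rule notI)
  assume "z \<in> resolvent_set_op a m t"
  then obtain C where C: "\<And>Df. Dm Df \<Longrightarrow> L2_norm (Df 0) \<le> C * L2_norm (Bop t z Df)"
    unfolding res_iff by blast
  obtain Df where Df: "Dm Df" and lt: "L2_norm (Bop t z Df) < (1 / (\<bar>C\<bar> + 1)) * L2_norm (Df 0)"
  proof -
    have "1 / (\<bar>C\<bar> + 1) > 0" by (simp add: add_pos_nonneg)
    then show ?thesis using assms that by blast
  qed
  have pos: "L2_norm (Df 0) > 0"
  proof (rule ccontr)
    assume "\<not> L2_norm (Df 0) > 0"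
    then have "L2_norm (Df 0) = 0" using L2_norm_nonneg[of "Df 0"] by simp
    then show False using lt L2_norm_nonneg[of "Bop t z Df"] by simp
  qed
  have "L2_norm (Df 0) \<le> C * L2_norm (Bop t z Df)" by (rule C[OF Df])
  also have "\<dots> \<le> \<bar>C\<bar> * L2_norm (Bop t z Df)" by (simp add: L2_norm_nonneg mult_right_mono)
  also have "\<dots> \<le> \<bar>C\<bar> * ((1 / (\<bar>C\<bar> + 1)) * L2_norm (Df 0))"
    using lt by (intro mult_left_mono) auto
  also have "\<dots> < L2_norm (Df 0)"
    using pos by (simp add: field_simps)
  finally show False by simp
qed

lemma lemmaK:
  assumes mu: "Im \<mu> = 0" and res: "\<mu> \<in> resolvent_set_op a m t"
    and g0: "Dm Dg0" and dlt: "\<delta> > 0" and big: "L2_norm (Bop t \<mu> Dg0) < \<delta> * L2_norm (Dg0 0)"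
  shows "\<exists>lam\<in>spectrum_op a m t. cmod (lam - \<mu>) < \<delta>"
proof -
  obtain C where C: "\<And>Df. Dm Df \<Longrightarrow> L2_norm (Df 0) \<le> C * L2_norm (Bop t \<mu> Df)"
    using res unfolding res_iff by blast
  have srj: "\<And>g. L2 g \<Longrightarrow> \<exists>Df. Dm Df \<and> (AE x in lborel. Bop t \<mu> Df x = g x)"
    using res unfolding res_iff by blast
  have cm: "cnj \<mu> = \<mu>" using mu by (simp add: complex_eq_iff)
  have symB: "L2_inner (Bop t \<mu> Du) (Dv 0) = L2_inner (Du 0) (Bop t \<mu> Dv)" if Du: "Dm Du" and Dv: "Dm Dv" for Du Dv
  proof -
    have Lu: "L2 (Du 0)" by (rule Dm_L2[OF Du])
    have Lv: "L2 (Dv 0)" by (rule Dm_L2[OF Dv])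
    have "L2_inner (Bop t \<mu> Du) (Dv 0) = L2_inner (opA a m t Du) (Dv 0) - \<mu> * L2_inner (Du 0) (Dv 0)"
      unfolding Bop_def using Lu Lv opA_L2'[OF Du] by (simp add: L2_inner_diff_left L2_cmult L2_inner_scale_left)
    also have "\<dots> = L2_inner (Du 0) (opA a m t Dv) - cnj \<mu> * L2_inner (Du 0) (Dv 0)"
      using sym[OF Du Dv] cm by simp
    also have "\<dots> = L2_inner (Du 0) (Bop t \<mu> Dv)"
      unfolding Bop_def using Lu Lv opA_L2'[OF Dv] by (simp add: L2_inner_diff_right L2_cmult L2_inner_scale_right)
    finally show ?thesis .
  qed
  have qreal: "Im (L2_inner (Dv 0) (Bop t \<mu> Dv)) = 0" if Dv: "Dm Dv" for Dv
  proof -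
    let ?w = "L2_inner (Dv 0) (Bop t \<mu> Dv)"
    have "?w = cnj ?w" using symB[OF Dv Dv] L2_inner_cnj[of "Dv 0" "Bop t \<mu> Dv"] by simp
    then have "Im ?w = Im (cnj ?w)" by (rule arg_cong)
    then show ?thesis by simp
  qed
  define q where "q (Dv :: nat \<Rightarrow> real \<Rightarrow> complex) = Re (L2_inner (Dv 0) (Bop t \<mu> Dv))" for Dv
  define r where "r (Dv :: nat \<Rightarrow> real \<Rightarrow> complex) = L2_norm (Dv 0)" for Dv
  have qeq: "L2_inner (Dv 0) (Bop t \<mu> Dv) = complex_of_real (q Dv)" if "Dm Dv" for Dv
    using qreal[OF that] unfolding q_def by (simp add: complex_eq_iff)
  have qabs: "\<bar>q Dv\<bar> \<le> r Dv * L2_norm (Bop t \<mu> Dv)" if Dv: "Dm Dv" for Dv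
    unfolding q_def r_def
    using abs_Re_le_cmod[of "L2_inner (Dv 0) (Bop t \<mu> Dv)"] L2_cauchy_schwarz[OF Dm_L2[OF Dv] Bop_L2[OF Dv, of t \<mu>]]
    by linarith
  have Bzero: "r Dv = 0" if Dv: "Dm Dv" and "L2_norm (Bop t \<mu> Dv) = 0" for Dv
    using C[OF Dv] that(2) L2_norm_nonneg[of "Dv 0"] unfolding r_def by simp
  define U where "U = {Dv. Dm Dv \<and> L2_norm (Bop t \<mu> Dv) = 1}"
  have norml: "(\<lambda>k x. complex_of_real (1 / L2_norm (Bop t \<mu> Dp)) * Dp k x) \<in> U
      \<and> r (\<lambda>k x. complex_of_real (1 / L2_norm (Bop t \<mu> Dp)) * Dp k x) = r Dp / L2_norm (Bop t \<mu> Dp)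
      \<and> q (\<lambda>k x. complex_of_real (1 / L2_norm (Bop t \<mu> Dp)) * Dp k x) = q Dp / (L2_norm (Bop t \<mu> Dp))\<^sup>2"
    if Dp: "Dm Dp" and pos: "L2_norm (Bop t \<mu> Dp) > 0" for Dp
  proof (intro conjI)
    let ?n = "L2_norm (Bop t \<mu> Dp)"
    let ?s = "complex_of_real (1 / ?n)"
    let ?Dq = "\<lambda>k x. ?s * Dp k x"
    have Dq: "Dm ?Dq" by (rule Dm_scale[OF Dp])
    have BDq: "Bop t \<mu> ?Dq = (\<lambda>x. ?s * Bop t \<mu> Dp x)" by (rule Bop_scale)
    have "L2_norm (Bop t \<mu> ?Dq) = 1" unfolding BDq L2_norm_scale using pos by (simp add: norm_divide)
    then show "?Dq \<in> U" unfolding U_def using Dq by simp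
    have "L2_norm (?Dq 0) = cmod ?s * L2_norm (Dp 0)" by (rule L2_norm_scale)
    then show "r ?Dq = r Dp / ?n" unfolding r_def using pos by (simp add: norm_divide)
    have "L2_inner (?Dq 0) (Bop t \<mu> ?Dq) = ?s * cnj ?s * L2_inner (Dp 0) (Bop t \<mu> Dp)"
      unfolding BDq L2_inner_scale_left L2_inner_scale_right by (simp only: mult_ac)
    also have "\<dots> = complex_of_real (q Dp / ?n\<^sup>2)"
      using qeq[OF Dp] by (simp add: power2_eq_square)
    finally show "q ?Dq = q Dp / ?n\<^sup>2" unfolding q_def by simp
  qed
  have rC: "r Dv \<le> C" if "Dv \<in> U" for Dv using C[of Dv] that unfolding U_def r_def by simp
  have qr: "\<bar>q Dv\<bar> \<le> r Dv" if "Dv \<in> U" for Dv using qabs[of Dv] that unfolding U_def by simp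
  have Bg0: "L2_norm (Bop t \<mu> Dg0) > 0"
  proof (rule ccontr)
    assume "\<not> ?thesis"
    then have z: "L2_norm (Bop t \<mu> Dg0) = 0" using L2_norm_nonneg[of "Bop t \<mu> Dg0"] by simp
    then have "r Dg0 = 0" by (rule Bzero[OF g0])
    then show False using big z dlt unfolding r_def by simp
  qed
  define v0 where "v0 = (\<lambda>k x. complex_of_real (1 / L2_norm (Bop t \<mu> Dg0)) * Dg0 k x)"
  have v0U: "v0 \<in> U" and rv0: "r v0 = r Dg0 / L2_norm (Bop t \<mu> Dg0)"
    using norml[OF g0 Bg0] unfolding v0_def by auto
  have "r Dg0 / L2_norm (Bop t \<mu> Dg0) > 1 / \<delta>"
    unfolding r_def using big Bg0 dlt by (simp add: field_simps)
  then have rv0big: "r v0 > 1 / \<delta>" using rv0 by simp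
  have Une: "r ` U \<noteq> {}" using v0U by blast
  have Ubdd: "bdd_above (r ` U)" by (rule bdd_aboveI2[where M = C]) (rule rC)
  define N where "N = Sup (r ` U)"
  have rN: "r Dv \<le> N" if "Dv \<in> U" for Dv unfolding N_def by (rule cSup_upper) (use that Ubdd in auto)
  have Nbig: "N > 1 / \<delta>" using rN[OF v0U] rv0big by linarith
  have Npos: "N > 0" using Nbig dlt by (smt (verit) divide_pos_pos)
  define w where "w \<sigma> = Sup ((\<lambda>v. \<sigma> * q v) ` U)" for \<sigma> :: real
  have wbdd: "bdd_above ((\<lambda>v. \<sigma> * q v) ` U)" if "\<sigma> = 1 \<or> \<sigma> = -1" for \<sigma>
  proof (rule bdd_aboveI2)
    fix v assume "v \<in> U"
    then show "\<sigma> * q v \<le> C" using qr[of v] rC[of v] that by auto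
  qed
  have qw: "\<sigma> * q v \<le> w \<sigma>" if "\<sigma> = 1 \<or> \<sigma> = -1" "v \<in> U" for \<sigma> v
    unfolding w_def by (rule cSup_upper) (use that wbdd in auto)
  have wN: "w \<sigma> \<le> N" if "\<sigma> = 1 \<or> \<sigma> = -1" for \<sigma>
    unfolding w_def
  proof (rule cSup_least)
    show "(\<lambda>v. \<sigma> * q v) ` U \<noteq> {}" using v0U by blast
    fix y assume "y \<in> (\<lambda>v. \<sigma> * q v) ` U"
    then obtain v where v: "v \<in> U" "y = \<sigma> * q v" by blast
    then show "y \<le> N" using qr[OF v(1)] rN[OF v(1)] that by auto
  qed
  have scaled: "\<sigma> * q Dp \<le> w \<sigma> * (L2_norm (Bop t \<mu> Dp))\<^sup>2" if s: "\<sigma> = 1 \<or> \<sigma> = -1" and Dp: "Dm Dp" for \<sigma> Dp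
  proof (cases "L2_norm (Bop t \<mu> Dp) = 0")
    case True
    then have "q Dp = 0" using qabs[OF Dp] by simp
    then show ?thesis using True by simp
  next
    case False
    then have pos: "L2_norm (Bop t \<mu> Dp) > 0" using L2_norm_nonneg[of "Bop t \<mu> Dp"] by simp
    have "\<sigma> * (q Dp / (L2_norm (Bop t \<mu> Dp))\<^sup>2) \<le> w \<sigma>"
      using qw[OF s, of "\<lambda>k x. complex_of_real (1 / L2_norm (Bop t \<mu> Dp)) * Dp k x"] norml[OF Dp pos] by simp
    then show ?thesis using pos by (simp add: field_simps)
  qed
  have polar: "r Dv \<le> max (w 1) (w (-1))" if vU: "Dv \<in> U" for Dv
  proof (cases "r Dv = 0")
    case True
    have "q Dv \<le> w 1" "- q Dv \<le> w (-1)" using qw[of 1 Dv] qw[of "-1" Dv] vU by auto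
    then show ?thesis using True by linarith
  next
    case False
    define rr where "rr = r Dv"
    have Dv: "Dm Dv" and nBv: "L2_norm (Bop t \<mu> Dv) = 1" using vU unfolding U_def by auto
    have rpos: "rr > 0" using False L2_norm_nonneg[of "Dv 0"] unfolding rr_def r_def by simp
    have Lv: "L2 (Dv 0)" by (rule Dm_L2[OF Dv])
    have Lv': "L2 (\<lambda>x. complex_of_real (1 / rr) * Dv 0 x)" by (rule L2_cmult[OF Lv])
    obtain Dx where Dx: "Dm Dx" and BDx: "AE x in lborel. Bop t \<mu> Dx x = complex_of_real (1 / rr) * Dv 0 x"
      using srj[OF Lv'] by blast
    have Lx: "L2 (Dx 0)" by (rule Dm_L2[OF Dx])
    have LBv: "L2 (Bop t \<mu> Dv)" by (rule Bop_L2[OF Dv])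
    have LBx: "L2 (Bop t \<mu> Dx)" by (rule Bop_L2[OF Dx])
    have vv: "L2_inner (Dv 0) (Dv 0) = complex_of_real (rr\<^sup>2)"
      unfolding rr_def r_def by (rule L2_inner_self[OF Lv])
    have i1: "L2_inner (Dv 0) (Bop t \<mu> Dx) = complex_of_real rr"
    proof -
      have "L2_inner (Dv 0) (Bop t \<mu> Dx) = L2_inner (Dv 0) (\<lambda>x. complex_of_real (1 / rr) * Dv 0 x)"
        by (rule L2_AE_inner_eq_right[OF LBx Lv' Lv BDx])
      also have "\<dots> = cnj (complex_of_real (1 / rr)) * complex_of_real (rr\<^sup>2)"
        unfolding L2_inner_scale_right vv ..
      also have "\<dots> = complex_of_real (1 / rr) * complex_of_real (rr\<^sup>2)" by simp
      also have "\<dots> = complex_of_real rr" using rpos by (simp add: power2_eq_square)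
      finally show ?thesis .
    qed
    have i2: "L2_inner (Dx 0) (Bop t \<mu> Dv) = complex_of_real rr"
    proof -
      have "L2_inner (Dx 0) (Bop t \<mu> Dv) = L2_inner (Bop t \<mu> Dx) (Dv 0)" using symB[OF Dx Dv] by simp
      also have "\<dots> = L2_inner (\<lambda>x. complex_of_real (1 / rr) * Dv 0 x) (Dv 0)"
        by (rule L2_AE_inner_eq_left[OF LBx Lv' Lv BDx])
      also have "\<dots> = complex_of_real (1 / rr) * complex_of_real (rr\<^sup>2)"
        unfolding L2_inner_scale_left vv ..
      also have "\<dots> = complex_of_real rr" using rpos by (simp add: power2_eq_square)
      finally show ?thesis .
    qed
    have nBx: "L2_norm (Bop t \<mu> Dx) = 1"
    proof -
      have "L2_norm (Bop t \<mu> Dx) = L2_norm (\<lambda>x. complex_of_real (1 / rr) * Dv 0 x)"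
        by (rule L2_AE_norm_eq[OF LBx Lv' BDx])
      also have "\<dots> = 1" using rpos unfolding L2_norm_scale rr_def r_def by (simp add: norm_divide)
      finally show ?thesis .
    qed
    define Dpp where "Dpp = (\<lambda>k x. Dv k x + 1 * Dx k x)"
    define Dpm where "Dpm = (\<lambda>k x. Dv k x + (-1) * Dx k x)"
    have Dpp: "Dm Dpp" unfolding Dpp_def by (rule Dm_lincomb[OF Dv Dx])
    have Dpm: "Dm Dpm" unfolding Dpm_def by (rule Dm_lincomb[OF Dv Dx])
    have BDpp: "Bop t \<mu> Dpp = (\<lambda>x. Bop t \<mu> Dv x + Bop t \<mu> Dx x)" unfolding Dpp_def Bop_lincomb by simp
    have BDpm: "Bop t \<mu> Dpm = (\<lambda>x. Bop t \<mu> Dv x - Bop t \<mu> Dx x)" unfolding Dpm_def Bop_lincomb by simp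
    have Dpp0: "Dpp 0 = (\<lambda>x. Dv 0 x + Dx 0 x)" unfolding Dpp_def by simp
    have Dpm0: "Dpm 0 = (\<lambda>x. Dv 0 x - Dx 0 x)" unfolding Dpm_def by simp
    have ipp: "L2_inner (Dpp 0) (Bop t \<mu> Dpp) = L2_inner (Dv 0) (Bop t \<mu> Dv) + L2_inner (Dv 0) (Bop t \<mu> Dx)
        + L2_inner (Dx 0) (Bop t \<mu> Dv) + L2_inner (Dx 0) (Bop t \<mu> Dx)"
      unfolding Dpp0 BDpp using Lv Lx LBv LBx
      by (simp add: L2_inner_add_left L2_inner_add_right L2_add)
    have ipm: "L2_inner (Dpm 0) (Bop t \<mu> Dpm) = L2_inner (Dv 0) (Bop t \<mu> Dv) - L2_inner (Dv 0) (Bop t \<mu> Dx)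
        - L2_inner (Dx 0) (Bop t \<mu> Dv) + L2_inner (Dx 0) (Bop t \<mu> Dx)"
      unfolding Dpm0 BDpm using Lv Lx LBv LBx
      by (simp add: L2_inner_diff_left L2_inner_diff_right L2_diff)
    have "q Dpp - q Dpm = 4 * rr"
      unfolding q_def ipp ipm i1 i2 by simp
    moreover have "q Dpp \<le> w 1 * (L2_norm (Bop t \<mu> Dpp))\<^sup>2" using scaled[of 1 Dpp] Dpp by simp
    moreover have "- q Dpm \<le> w (-1) * (L2_norm (Bop t \<mu> Dpm))\<^sup>2" using scaled[of "-1" Dpm] Dpm by simp
    moreover have "(L2_norm (Bop t \<mu> Dpm))\<^sup>2 + (L2_norm (Bop t \<mu> Dpp))\<^sup>2 = 4"
      using L2_parallelogram[OF LBv LBx] nBv nBx unfolding BDpp BDpm by simp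
    moreover have "w 1 * (L2_norm (Bop t \<mu> Dpp))\<^sup>2 \<le> max (w 1) (w (-1)) * (L2_norm (Bop t \<mu> Dpp))\<^sup>2"
      by (intro mult_right_mono) auto
    moreover have "w (-1) * (L2_norm (Bop t \<mu> Dpm))\<^sup>2 \<le> max (w 1) (w (-1)) * (L2_norm (Bop t \<mu> Dpm))\<^sup>2"
      by (intro mult_right_mono) auto
    ultimately have "4 * rr \<le> max (w 1) (w (-1)) * (L2_norm (Bop t \<mu> Dpp))\<^sup>2 + max (w 1) (w (-1)) * (L2_norm (Bop t \<mu> Dpm))\<^sup>2"
      by linarith
    also have "\<dots> = max (w 1) (w (-1)) * ((L2_norm (Bop t \<mu> Dpm))\<^sup>2 + (L2_norm (Bop t \<mu> Dpp))\<^sup>2)"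
      by (simp add: algebra_simps)
    also have "\<dots> = max (w 1) (w (-1)) * 4"
      using L2_parallelogram[OF LBv LBx] nBv nBx unfolding BDpp BDpm by simp
    finally show ?thesis unfolding rr_def by simp
  qed
  have NM: "N \<le> max (w 1) (w (-1))"
    unfolding N_def by (rule cSup_least[OF Une]) (use polar in auto)
  have "\<exists>\<sigma>. (\<sigma> = 1 \<or> \<sigma> = -1) \<and> w \<sigma> = N"
    using NM wN[of 1] wN[of "-1"] by (metis max_def order_antisym)
  then obtain \<sigma> where s: "\<sigma> = 1 \<or> \<sigma> = -1" and wsN: "w \<sigma> = N" by blast
  define lam where "lam = \<mu> + complex_of_real (\<sigma> / N)"
  have lspec: "lam \<in> spectrum_op a m t"
  proof (rule approx_spec)
    fix e :: real assume e: "e > 0"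
    define \<epsilon> where "\<epsilon> = min (N / 2) (e\<^sup>2 * N ^ 3 / 16)"
    have eps: "\<epsilon> > 0" "\<epsilon> \<le> N / 2" "\<epsilon> \<le> e\<^sup>2 * N ^ 3 / 16" unfolding \<epsilon>_def using Npos e by auto
    have "N - \<epsilon> < Sup ((\<lambda>v. \<sigma> * q v) ` U)" using wsN eps unfolding w_def by simp
    then obtain v where vU: "v \<in> U" and vq: "N - \<epsilon> < \<sigma> * q v"
      using less_cSupD[of "(\<lambda>v. \<sigma> * q v) ` U"] v0U by blast
    have Dv: "Dm v" and nBv: "L2_norm (Bop t \<mu> v) = 1" using vU unfolding U_def by auto
    have Lv: "L2 (v 0)" by (rule Dm_L2[OF Dv])
    have LBv: "L2 (Bop t \<mu> v)" by (rule Bop_L2[OF Dv])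
    have Bl: "Bop t lam v = (\<lambda>x. Bop t \<mu> v x + (- complex_of_real (\<sigma> / N)) * v 0 x)"
      unfolding Bop_def lam_def by (auto simp: algebra_simps)
    have ss: "\<sigma>\<^sup>2 = 1" using s by auto
    have rv: "r v \<le> N" by (rule rN[OF vU])
    have rvq: "N - \<epsilon> < r v" using vq qr[OF vU] s by auto
    have Re1: "Re (L2_inner (Bop t \<mu> v) (v 0)) = q v"
      unfolding q_def using L2_inner_cnj[of "Bop t \<mu> v" "v 0"] by simp
    have "(L2_norm (Bop t lam v))\<^sup>2 = 1 + 2 * Re (cnj (- complex_of_real (\<sigma> / N)) * L2_inner (Bop t \<mu> v) (v 0))
        + (cmod (- complex_of_real (\<sigma> / N)))\<^sup>2 * (r v)\<^sup>2"
      using L2_norm_sq_expand[OF LBv Lv, of "- complex_of_real (\<sigma> / N)"] unfolding Bl r_def nBv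
      by (simp only: power_one)
    also have "Re (cnj (- complex_of_real (\<sigma> / N)) * L2_inner (Bop t \<mu> v) (v 0)) = - (\<sigma> / N) * q v"
      using Re1 by simp
    also have "(cmod (- complex_of_real (\<sigma> / N)))\<^sup>2 = 1 / N\<^sup>2"
    proof -
      have "(cmod (- complex_of_real (\<sigma> / N)))\<^sup>2 = (\<sigma> / N)\<^sup>2"
        by (simp only: norm_minus_cancel norm_of_real power2_abs)
      also have "\<dots> = 1 / N\<^sup>2" using ss by (simp add: power_divide)
      finally show ?thesis .
    qed
    finally have eqn: "(L2_norm (Bop t lam v))\<^sup>2 = 1 - 2 * (\<sigma> * q v) / N + (r v)\<^sup>2 / N\<^sup>2" by simp
    have "(r v)\<^sup>2 / N\<^sup>2 \<le> 1" using rv Npos rvq eps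
      by (simp add: field_simps power_mono)
    moreover have "2 * (\<sigma> * q v) / N > 2 * (N - \<epsilon>) / N" using vq Npos by (simp add: divide_strict_right_mono)
    ultimately have "(L2_norm (Bop t lam v))\<^sup>2 < 1 - 2 * (N - \<epsilon>) / N + 1" unfolding eqn by linarith
    also have "\<dots> = 2 * \<epsilon> / N" using Npos by (simp add: field_simps)
    also have "\<dots> \<le> 2 * (e\<^sup>2 * N ^ 3 / 16) / N"
    proof (rule divide_right_mono)
      show "2 * \<epsilon> \<le> 2 * (e\<^sup>2 * N ^ 3 / 16)" using eps(3) by linarith
    qed (use Npos in simp)
    also have "\<dots> = (e * (N / 2))\<^sup>2 / 2" using Npos by (simp add: field_simps power2_eq_square power3_eq_cube)
    also have "\<dots> < (e * (N / 2))\<^sup>2" using e Npos by simp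
    also have "\<dots> \<le> (e * r v)\<^sup>2"
    proof -
      have "N / 2 \<le> r v" using rvq eps by linarith
      then show ?thesis using e Npos by (intro power_mono mult_left_mono) auto
    qed
    finally have "(L2_norm (Bop t lam v))\<^sup>2 < (e * r v)\<^sup>2" .
    then have "L2_norm (Bop t lam v) < e * r v"
      using e L2_norm_nonneg[of "v 0"] unfolding r_def
      by (meson mult_nonneg_nonneg less_le power_less_imp_less_base)
    then show "\<exists>Df. Dm Df \<and> L2_norm (Bop t lam Df) < e * L2_norm (Df 0)"
      using Dv unfolding r_def by blast
  qed
  have "cmod (lam - \<mu>) = 1 / N" unfolding lam_def using s Npos by (auto simp: norm_divide)
  also have "\<dots> < \<delta>" using Nbig dlt Npos by (simp add: field_simps)
  finally show ?thesis using lspec by blast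
qed

end


context opsetting
begin

lemma nonzero_elem: "\<exists>Df. Dm Df \<and> L2_norm (Df 0) > 0"
proof (rule ccontr)
  assume nt: "\<not> ?thesis"
  have z: "L2_norm (Df 0) = 0" if Df: "Dm Df" for Df
  proof -
    have "\<not> L2_norm (Df 0) > 0" using nt Df by blast
    then show ?thesis using L2_norm_nonneg[of "Df 0"] by simp
  qed
  define h where "h x = complex_of_real (indicator {0..1::real} x)" for x
  have Lh: "L2 h" unfolding h_def by (rule L2_indicator_Icc)
  have "AE x in lborel. h x = 0"
  proof (rule dens[OF Lh])
    fix Df assume Df: "Dm Df"
    have "cmod (L2_inner (Df 0) h) \<le> L2_norm (Df 0) * L2_norm h" by (rule L2_cauchy_schwarz[OF Dm_L2[OF Df] Lh])
    then show "L2_inner (Df 0) h = 0" using z[OF Df] by simp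
  qed
  then have "L2_norm h = 0" using L2_norm_zero_iff[OF Lh] by simp
  moreover have "(L2_norm h)\<^sup>2 = 1"
  proof -
    have "(L2_norm h)\<^sup>2 = (LINT x|lborel. (cmod (h x))\<^sup>2)" by (rule L2_norm_sq_int[OF Lh])
    also have "(\<lambda>x. (cmod (h x))\<^sup>2) = (\<lambda>x. indicator {0..1::real} x)"
      unfolding h_def by (auto simp: fun_eq_iff indicator_def)
    also have "(LINT x|lborel. (indicator {0..1::real} x :: real)) = 1"
      by (simp only: Bochner_Integration.integral_indicator) simp
    finally show ?thesis .
  qed
  ultimately show False by simp
qed

lemma spec_nonempty: "spectrum_op a m t \<noteq> {}"
proof (cases "0 \<in> spectrum_op a m t")
  case True then show ?thesis by blast
next
  case False
  then have res: "0 \<in> resolvent_set_op a m t" unfolding spec_iff by simp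
  obtain Df where Df: "Dm Df" and pos: "L2_norm (Df 0) > 0" using nonzero_elem by blast
  define \<delta> where "\<delta> = (L2_norm (Bop t 0 Df) + 1) / L2_norm (Df 0)"
  have dpos: "\<delta> > 0" unfolding \<delta>_def using pos L2_norm_nonneg[of "Bop t 0 Df"] by simp
  have "L2_norm (Bop t 0 Df) < \<delta> * L2_norm (Df 0)" unfolding \<delta>_def using pos by simp
  then obtain lam where "lam \<in> spectrum_op a m t" using lemmaK[OF _ res Df dpos] by auto
  then show ?thesis by blast
qed

end

theorem proposition3p1:
  fixes m :: nat
    and a :: "nat \<Rightarrow> real \<times> real \<Rightarrow> complex"
    and \<theta> :: real
    and \<theta>s :: "nat \<Rightarrow> real"
  assumes coeffs: "\<And>k. k \<le> m \<Longrightarrow> smooth_bounded_periodic (a k)"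
    and selfadj: "\<And>t. self_adjoint_op a m t"
    and ell: "elliptic_op a m"
    and conv: "\<theta>s \<longlonglongrightarrow> \<theta>"
  shows "(\<forall>f Df. sobolev m f Df \<longrightarrow>
            (\<lambda>n. L2_norm (\<lambda>x. opA a m \<theta> Df x - opA a m (\<theta>s n) Df x)) \<longlonglongrightarrow> 0)
       \<and> (\<forall>\<mu>\<in>spectrum_op a m \<theta>. \<exists>l. (\<forall>n. l n \<in> spectrum_op a m (\<theta>s n)) \<and> l \<longlonglongrightarrow> \<mu>)"
proof -
  interpret opsetting m a by (rule opsetting.intro) (use coeffs selfadj in auto)
  have part1: "\<forall>f Df. sobolev m f Df \<longrightarrow>
            (\<lambda>n. L2_norm (\<lambda>x. opA a m \<theta> Df x - opA a m (\<theta>s n) Df x)) \<longlonglongrightarrow> 0"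
    using strong_conv[OF _ conv] by blast
  have part2: "\<exists>l. (\<forall>n. l n \<in> spectrum_op a m (\<theta>s n)) \<and> l \<longlonglongrightarrow> \<mu>" if mu: "\<mu> \<in> spectrum_op a m \<theta>" for \<mu>
  proof -
    have mur: "Im \<mu> = 0"
    proof (rule ccontr)
      assume "Im \<mu> \<noteq> 0"
      then have "\<mu> \<in> resolvent_set_op a m \<theta>" by (rule nonreal_res)
      then show False using mu unfolding spec_iff by simp
    qed
    have cm: "cnj \<mu> = \<mu>" using mur by (simp add: complex_eq_iff)
    have near: "eventually (\<lambda>n. \<exists>lam\<in>spectrum_op a m (\<theta>s n). cmod (lam - \<mu>) < \<epsilon>) sequentially"
      if eps: "\<epsilon> > 0" for \<epsilon>
    proof -
      have "\<exists>Df. Dm Df \<and> L2_norm (Bop \<theta> \<mu> Df) < (\<epsilon> / 2) * L2_norm (Df 0)"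
      proof (rule ccontr)
        assume nt: "\<not> ?thesis"
        have b: "(\<epsilon> / 2) * L2_norm (Df 0) \<le> L2_norm (Bop \<theta> \<mu> Df)" if Df: "Dm Df" for Df
        proof -
          have "\<not> L2_norm (Bop \<theta> \<mu> Df) < (\<epsilon> / 2) * L2_norm (Df 0)" using nt Df by blast
          then show ?thesis by simp
        qed
        have "\<mu> \<in> resolvent_set_op a m \<theta>"
          by (rule in_res_intro[of "\<epsilon> / 2"]) (use eps b cm in auto)
        then show False using mu unfolding spec_iff by simp
      qed
      then obtain Df where Df: "Dm Df" and small: "L2_norm (Bop \<theta> \<mu> Df) < (\<epsilon> / 2) * L2_norm (Df 0)"
        by blast
      have sob: "sobolev m (Df 0) Df" using Df unfolding Dm_def .
      have tc: "(\<lambda>n. L2_norm (Bop (\<theta>s n) \<mu> Df)) \<longlonglongrightarrow> L2_norm (Bop \<theta> \<mu> Df)"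
      proof (rule L2_norm_tendsto[OF Bop_L2[OF Df] Bop_L2[OF Df]])
        have "(\<lambda>n. L2_norm (\<lambda>x. Bop (\<theta>s n) \<mu> Df x - Bop \<theta> \<mu> Df x)) =
              (\<lambda>n. L2_norm (\<lambda>x. opA a m \<theta> Df x - opA a m (\<theta>s n) Df x))"
        proof
          fix n
          have "(\<lambda>x. Bop (\<theta>s n) \<mu> Df x - Bop \<theta> \<mu> Df x) = (\<lambda>x. opA a m (\<theta>s n) Df x - opA a m \<theta> Df x)"
            unfolding Bop_def by (auto simp: fun_eq_iff)
          then show "L2_norm (\<lambda>x. Bop (\<theta>s n) \<mu> Df x - Bop \<theta> \<mu> Df x) =
              L2_norm (\<lambda>x. opA a m \<theta> Df x - opA a m (\<theta>s n) Df x)"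
            by (simp only: \<open>(\<lambda>x. Bop (\<theta>s n) \<mu> Df x - Bop \<theta> \<mu> Df x) = (\<lambda>x. opA a m (\<theta>s n) Df x - opA a m \<theta> Df x)\<close>)
               (rule L2_norm_commute)
        qed
        then show "(\<lambda>n. L2_norm (\<lambda>x. Bop (\<theta>s n) \<mu> Df x - Bop \<theta> \<mu> Df x)) \<longlonglongrightarrow> 0"
          using strong_conv[OF sob conv] by simp
      qed
      have ev: "eventually (\<lambda>n. L2_norm (Bop (\<theta>s n) \<mu> Df) < (\<epsilon> / 2) * L2_norm (Df 0)) sequentially"
        by (rule order_tendstoD(2)[OF tc small])
      show ?thesis
      proof (rule eventually_mono[OF ev])
        fix n assume n: "L2_norm (Bop (\<theta>s n) \<mu> Df) < (\<epsilon> / 2) * L2_norm (Df 0)"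
        show "\<exists>lam\<in>spectrum_op a m (\<theta>s n). cmod (lam - \<mu>) < \<epsilon>"
        proof (cases "\<mu> \<in> spectrum_op a m (\<theta>s n)")
          case True then show ?thesis using eps by (intro bexI[of _ \<mu>]) auto
        next
          case False
          then have res: "\<mu> \<in> resolvent_set_op a m (\<theta>s n)" unfolding spec_iff by simp
          have "(\<epsilon> / 2) * L2_norm (Df 0) \<le> \<epsilon> * L2_norm (Df 0)"
            by (rule mult_right_mono) (use eps L2_norm_nonneg[of "Df 0"] in auto)
          then have "L2_norm (Bop (\<theta>s n) \<mu> Df) < \<epsilon> * L2_norm (Df 0)"
            using n by linarith
          then show ?thesis using lemmaK[OF mur res Df eps] by blast
        qed
      qed
    qed
    define dn where "dn n = Inf ((\<lambda>lam. cmod (lam - \<mu>)) ` spectrum_op a m (\<theta>s n))" for n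
    have bdd: "bdd_below ((\<lambda>lam. cmod (lam - \<mu>)) ` spectrum_op a m (\<theta>s n))" for n
      by (rule bdd_belowI2[where m = 0]) simp
    have exl: "\<exists>lam. lam \<in> spectrum_op a m (\<theta>s n) \<and> cmod (lam - \<mu>) < dn n + 1 / real (Suc n)" for n
    proof -
      have ne: "(\<lambda>lam. cmod (lam - \<mu>)) ` spectrum_op a m (\<theta>s n) \<noteq> {}" using spec_nonempty by blast
      have "Inf ((\<lambda>lam. cmod (lam - \<mu>)) ` spectrum_op a m (\<theta>s n)) < dn n + 1 / real (Suc n)"
        unfolding dn_def by simp
      then show ?thesis using cInf_lessD[OF ne] by blast
    qed
    have "\<forall>n. \<exists>lam. lam \<in> spectrum_op a m (\<theta>s n) \<and> cmod (lam - \<mu>) < dn n + 1 / real (Suc n)"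
      using exl by blast
    then obtain l where lall: "\<forall>n. l n \<in> spectrum_op a m (\<theta>s n) \<and> cmod (l n - \<mu>) < dn n + 1 / real (Suc n)"
      by (rule choice[THEN exE])
    have l: "\<And>n. l n \<in> spectrum_op a m (\<theta>s n)" and ld: "\<And>n. cmod (l n - \<mu>) < dn n + 1 / real (Suc n)"
      using lall by auto
    have "l \<longlonglongrightarrow> \<mu>"
    proof (rule tendstoI)
      fix e :: real assume e: "e > 0"
      have e2: "e / 2 > 0" using e by simp
      have ev1: "eventually (\<lambda>n. dn n < e / 2) sequentially"
      proof (rule eventually_mono[OF near[OF e2]])
        fix n assume "\<exists>lam\<in>spectrum_op a m (\<theta>s n). cmod (lam - \<mu>) < e / 2"
        then obtain lam where lm: "lam \<in> spectrum_op a m (\<theta>s n)" "cmod (lam - \<mu>) < e / 2" by blast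
        have "dn n \<le> cmod (lam - \<mu>)" unfolding dn_def by (rule cInf_lower[OF _ bdd[of n]]) (use lm in blast)
        then show "dn n < e / 2" using lm(2) by linarith
      qed
      have ev2: "eventually (\<lambda>n. 1 / real (Suc n) < e / 2) sequentially"
      proof -
        have "(\<lambda>n. 1 / real (Suc n)) \<longlonglongrightarrow> 0" by (rule LIMSEQ_Suc[OF lim_const_over_n[of 1, unfolded of_nat_Suc]]) 
        then show ?thesis using order_tendstoD(2) e2 by blast
      qed
      show "eventually (\<lambda>n. dist (l n) \<mu> < e) sequentially"
        using eventually_conj[OF ev1 ev2]
      proof (rule eventually_mono)
        fix n assume "dn n < e / 2 \<and> 1 / real (Suc n) < e / 2"
        then show "dist (l n) \<mu> < e" using ld[of n] by (simp add: dist_norm)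
      qed
    qed
    with l show ?thesis by blast
  qed
  show ?thesis using part1 part2 by blast
qed


end
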